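(* Let $w$ be a decreasing weight on $(0,\infty)$ with $W(t)=\int_0^t w$. The following are equivalent: (i) There exist $1<q<\infty$ and a weight $v$ such that $\Lambda^1(w)=\Gamma^q(v)$. (ii) For every $1<q<\infty$ there exists a weight $w_q$ satisfying $\big(\int_0^r w\big)^q\approx\int_0^r w_q(x)\,dx+r^q\int_r^\infty w_q(x)x^{-q}\,dx$ for all $r>0$ (constants independent of $r$) such that $\Lambda^1(w)=\Gamma^q(w_q)$. (iii) $\Lambda^1(w)=\Gamma^{1,\infty}(w)$, $\lim_{t\to\infty}w(t)=0$, and $w\in L^1(0,\infty)$.
   Context: A weight is a nonnegative locally integrable measurable function on $(0,\infty)$; "decreasing" means nonincreasing. For a measurable function $f$ on $\mathbb{R}^n$, $f^*$ is its decreasing rearrangement and $f^{**}(t)=\frac1t\int_0^t f^*(s)\,ds$. $\|f\|_{\Lambda^1(w)}=\int_0^\infty f^*w$, $\|f\|_{\Gamma^q(v)}=\big(\int_0^\infty (f^{**})^q v\big)^{1/q}$, $\|f\|_{\Gamma^{1,\infty}(w)}=\sup_{t>0}f^{**}(t)W(t)$, each space consisting of the $f$ with finite quantity. $X=Y$ means the spaces coincide with equivalent (quasi-)norms. *)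

theory Defs
  imports "HOL-Analysis.Analysis"
begin

definition is_weight :: "(real \<Rightarrow> real) \<Rightarrow> bool" where
  "is_weight v \<longleftrightarrow> set_borel_measurable lborel {0<..} v \<and> (\<forall>t>0. 0 \<le> v t)
     \<and> (\<forall>a b. 0 < a \<longrightarrow> set_integrable lborel {a..b} v)"

definition decreasing_weight :: "(real \<Rightarrow> real) \<Rightarrow> bool" where
  "decreasing_weight w \<longleftrightarrow> is_weight w \<and> (\<forall>s t. 0 < s \<longrightarrow> s \<le> t \<longrightarrow> w t \<le> w s)"

definition epowr :: "ennreal \<Rightarrow> real \<Rightarrow> ennreal" where
  "epowr x q = (if x = \<infinity> then \<infinity> else ennreal (enn2real x powr q))"

definition distrib_fun :: "('a::euclidean_space \<Rightarrow> real) \<Rightarrow> real \<Rightarrow> ennreal" where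
  "distrib_fun f s = emeasure lebesgue {x. s < \<bar>f x\<bar>}"

definition rearr :: "('a::euclidean_space \<Rightarrow> real) \<Rightarrow> real \<Rightarrow> ennreal" where
  "rearr f t = Inf (ennreal ` {s. 0 \<le> s \<and> distrib_fun f s \<le> ennreal t})"

definition max_rearr :: "('a::euclidean_space \<Rightarrow> real) \<Rightarrow> real \<Rightarrow> ennreal" where
  "max_rearr f t = ennreal (1 / t) * (\<integral>\<^sup>+ s\<in>{0<..<t}. rearr f s \<partial>lborel)"

definition Wprim :: "(real \<Rightarrow> real) \<Rightarrow> real \<Rightarrow> ennreal" where
  "Wprim w t = (\<integral>\<^sup>+ x\<in>{0<..<t}. ennreal (w x) \<partial>lborel)"

definition Lambda1_norm :: "(real \<Rightarrow> real) \<Rightarrow> ('a::euclidean_space \<Rightarrow> real) \<Rightarrow> ennreal" where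
  "Lambda1_norm w f = (\<integral>\<^sup>+ t\<in>{0<..}. rearr f t * ennreal (w t) \<partial>lborel)"

definition Gamma_norm :: "real \<Rightarrow> (real \<Rightarrow> real) \<Rightarrow> ('a::euclidean_space \<Rightarrow> real) \<Rightarrow> ennreal" where
  "Gamma_norm q v f = epowr (\<integral>\<^sup>+ t\<in>{0<..}. epowr (max_rearr f t) q * ennreal (v t) \<partial>lborel) (1 / q)"

definition Gamma1inf_norm :: "(real \<Rightarrow> real) \<Rightarrow> ('a::euclidean_space \<Rightarrow> real) \<Rightarrow> ennreal" where
  "Gamma1inf_norm w f = (SUP t\<in>{0<..}. max_rearr f t * Wprim w t)"

text \<open>X = Y: the spaces {f measurable : N f < \<infinity>} coincide with equivalent (quasi-)norms.
  Two-sided comparability on all measurable f (values in [0,\<infinity>]) encodes both.\<close>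
definition space_eq :: "(('a::euclidean_space \<Rightarrow> real) \<Rightarrow> ennreal) \<Rightarrow> (('a \<Rightarrow> real) \<Rightarrow> ennreal) \<Rightarrow> bool" where
  "space_eq N1 N2 \<longleftrightarrow> (\<exists>C::real. C > 0 \<and> (\<forall>f \<in> borel_measurable lebesgue.
      N1 f \<le> ennreal C * N2 f \<and> N2 f \<le> ennreal C * N1 f))"

definition equiv_on_pos :: "(real \<Rightarrow> ennreal) \<Rightarrow> (real \<Rightarrow> ennreal) \<Rightarrow> bool" where
  "equiv_on_pos A B \<longleftrightarrow> (\<exists>C::real. C > 0 \<and> (\<forall>r>0. A r \<le> ennreal C * B r \<and> B r \<le> ennreal C * A r))"

end

theory Submission
  imports Defs
begin

lemma emeasure_lebesgue_ball_kap:
  fixes r :: real assumes "0 \<le> r"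
  shows "emeasure lebesgue (ball (0::'a::euclidean_space) r) = ennreal (unit_ball_vol (DIM('a)) * r ^ DIM('a))"
proof -
  have "ball (0::'a) r \<in> sets lborel" by simp
  then have "emeasure lebesgue (ball (0::'a) r) = emeasure lborel (ball (0::'a) r)"
    by (simp add: emeasure_completion main_part_sets)
  also have "\<dots> = ennreal (unit_ball_vol (DIM('a)) * r ^ DIM('a))"
    by (rule emeasure_ball[OF assms])
  finally show ?thesis .
qed

lemma level_ball:
  fixes a :: real assumes "0 < a"
  shows "emeasure lebesgue {x::'a::euclidean_space. unit_ball_vol (DIM('a)) * norm x ^ DIM('a) < a} = ennreal a"
proof -
  define n where "n = DIM('a)"
  define k where "k = unit_ball_vol (DIM('a))"
  have n: "n > 0" unfolding n_def by simp
  have k: "k > 0" unfolding k_def by simp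
  define r where "r = root n (a / k)"
  have r0: "r \<ge> 0" unfolding r_def using assms k by (simp add: real_root_ge_zero)
  have rn: "r ^ n = a / k" unfolding r_def using assms k n by (simp add: real_root_pow_pos2)
  have "{x::'a. k * norm x ^ n < a} = ball 0 r"
  proof (safe)
    fix x :: 'a assume "k * norm x ^ n < a"
    then have "k * norm x ^ n < k * r ^ n" using rn k by simp
    then have "norm x ^ n < r ^ n" using k by simp
    then have "norm x < r" using r0 by (meson power_less_imp_less_base)
    then show "x \<in> ball 0 r" by simp
  next
    fix x :: 'a assume "x \<in> ball 0 r"
    then have "norm x < r" by simp
    then have "norm x ^ n < r ^ n" using n by (simp add: power_strict_mono)
    then show "k * norm x ^ n < a" using rn k by (simp add: field_simps)
  qed
  then have "emeasure lebesgue {x::'a. k * norm x ^ n < a} = ennreal (k * r ^ n)"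
    using emeasure_lebesgue_ball_kap[OF r0] unfolding k_def n_def by simp
  also have "k * r ^ n = a" using rn k by simp
  finally show ?thesis unfolding k_def n_def .
qed

lemma antitone_borel_ennreal:
  fixes g :: "real \<Rightarrow> ennreal"
  assumes "\<And>x y. x \<le> y \<Longrightarrow> g y \<le> g x"
  shows "g \<in> borel_measurable borel"
proof (rule borel_measurableI_greater)
  fix y
  have "is_interval {x. y < g x}"
    unfolding is_interval_1 using assms by (auto intro: less_le_trans)
  then show "{x \<in> space borel. y < g x} \<in> sets borel"
    by (simp add: real_interval_borel_measurable)
qed

lemma rearr_antitone: "t \<le> t' \<Longrightarrow> rearr f t' \<le> rearr f t"
  unfolding rearr_def
proof (rule Inf_superset_mono, rule image_mono)
  assume "t \<le> t'"
  then show "{s. 0 \<le> s \<and> distrib_fun f s \<le> ennreal t} \<subseteq> {s. 0 \<le> s \<and> distrib_fun f s \<le> ennreal t'}"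
    using ennreal_leI order_trans by blast
qed

lemma rearr_meas: "rearr f \<in> borel_measurable borel"
  by (rule antitone_borel_ennreal) (rule rearr_antitone)

declare rearr_meas[measurable]

lemma rearr_meas_lborel: "rearr f \<in> borel_measurable lborel"
  using rearr_meas by simp

lemma ball_set_lebesgue: "{x::'a::euclidean_space. c * norm x ^ m < a} \<in> sets lebesgue"
proof -
  have "open {x::'a. c * norm x ^ m < a}"
    by (intro open_Collect_less continuous_intros)
  then show ?thesis by simp
qed

lemma radial_meas:
  fixes psi :: "real \<Rightarrow> real"
  assumes anti: "\<And>x y. x \<le> y \<Longrightarrow> psi y \<le> psi x"
  shows "(\<lambda>x::'a::euclidean_space. psi (c * norm x ^ m)) \<in> borel_measurable lebesgue"
proof -
  have "(\<lambda>x. - psi x) \<in> borel_measurable borel"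
    by (rule borel_measurable_mono) (auto simp: mono_def anti)
  then have p: "psi \<in> borel_measurable borel"
    using borel_measurable_uminus_eq by blast
  have "(\<lambda>x::'a. psi (c * norm x ^ m)) \<in> borel_measurable borel"
    by (rule measurable_compose[OF _ p]) (intro borel_measurable_continuous_onI continuous_intros)
  then have "(\<lambda>x::'a. psi (c * norm x ^ m)) \<in> borel_measurable lborel" by simp
  then show ?thesis by (rule measurable_completion)
qed

lemma rearr_radial:
  fixes psi :: "real \<Rightarrow> real"
  assumes anti: "\<And>x y. x \<le> y \<Longrightarrow> psi y \<le> psi x"
    and nonneg: "\<And>x. 0 \<le> psi x"
    and rc: "\<And>t. \<exists>u>t. psi u = psi t"
    and t: "0 < t"
  shows "rearr (\<lambda>x::'a::euclidean_space. psi (unit_ball_vol (DIM('a)) * norm x ^ DIM('a))) t = ennreal (psi t)"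
proof -
  define k where "k = unit_ball_vol (DIM('a))"
  define f where "f = (\<lambda>x::'a. psi (k * norm x ^ DIM('a)))"
  have fm: "f \<in> borel_measurable lebesgue" unfolding f_def by (rule radial_meas[OF anti])
  define S where "S = {s. 0 \<le> s \<and> distrib_fun f s \<le> ennreal t}"
  have lvl: "{x. s < \<bar>f x\<bar>} \<in> sets lebesgue" for s
  proof -
    have "{x. s < \<bar>f x\<bar>} = (\<lambda>x. \<bar>f x\<bar>) -` {s<..} \<inter> space lebesgue" by auto
    also have "\<dots> \<in> sets lebesgue" using fm by (intro measurable_sets[of _ lebesgue borel]) auto
    finally show ?thesis .
  qed
  have a: "psi t \<in> S"
  proof -
    have "{x. psi t < \<bar>f x\<bar>} \<subseteq> {x::'a. k * norm x ^ DIM('a) < t}"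
    proof
      fix x assume "x \<in> {x. psi t < \<bar>f x\<bar>}"
      then have "psi t < psi (k * norm x ^ DIM('a))" unfolding f_def using nonneg by simp
      then have "k * norm x ^ DIM('a) < t" using anti by (meson not_le leD)
      then show "x \<in> {x::'a. k * norm x ^ DIM('a) < t}" by simp
    qed
    then have "distrib_fun f (psi t) \<le> emeasure lebesgue {x::'a. k * norm x ^ DIM('a) < t}"
      unfolding distrib_fun_def by (intro emeasure_mono ball_set_lebesgue)
    also have "\<dots> = ennreal t" unfolding k_def by (rule level_ball[OF t])
    finally show ?thesis unfolding S_def using nonneg by simp
  qed
  have b: "psi t \<le> s" if "s \<in> S" for s
  proof (rule ccontr)
    assume "\<not> psi t \<le> s"
    then have st: "s < psi t" by simp
    obtain u where u: "u > t" "psi u = psi t" using rc by blast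
    have "{x::'a. k * norm x ^ DIM('a) < u} \<subseteq> {x. s < \<bar>f x\<bar>}"
    proof
      fix x assume "x \<in> {x::'a. k * norm x ^ DIM('a) < u}"
      then have "psi u \<le> psi (k * norm x ^ DIM('a))" using anti by simp
      then show "x \<in> {x. s < \<bar>f x\<bar>}" unfolding f_def using st u nonneg by simp
    qed
    then have "emeasure lebesgue {x::'a. k * norm x ^ DIM('a) < u} \<le> distrib_fun f s"
      unfolding distrib_fun_def by (intro emeasure_mono lvl)
    moreover have "emeasure lebesgue {x::'a. k * norm x ^ DIM('a) < u} = ennreal u"
      unfolding k_def using u t by (intro level_ball) simp
    ultimately have "ennreal u \<le> ennreal t" using that unfolding S_def by auto
    then show False using u t by simp
  qed
  have "rearr f t = ennreal (psi t)"
    unfolding rearr_def S_def[symmetric]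
  proof (rule antisym)
    show "Inf (ennreal ` S) \<le> ennreal (psi t)" using a by (auto intro: Inf_lower)
    show "ennreal (psi t) \<le> Inf (ennreal ` S)"
      by (rule Inf_greatest) (auto intro: ennreal_leI b)
  qed
  then show ?thesis unfolding f_def k_def .
qed

definition stepf :: "(nat \<Rightarrow> real) \<Rightarrow> (nat \<Rightarrow> real) \<Rightarrow> nat \<Rightarrow> real \<Rightarrow> real" where
  "stepf c s K u = (\<Sum>k<K. c k * (if u < s k then 1 else 0))"

definition testf :: "(nat \<Rightarrow> real) \<Rightarrow> (nat \<Rightarrow> real) \<Rightarrow> nat \<Rightarrow> 'a::euclidean_space \<Rightarrow> real" where
  "testf c s K x = stepf c s K (unit_ball_vol (DIM('a)) * norm x ^ DIM('a))"

lemma stepf_anti: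
  assumes "\<And>k. 0 \<le> c k" "x \<le> y" shows "stepf c s K y \<le> stepf c s K x"
  unfolding stepf_def using assms by (intro sum_mono) auto

lemma stepf_nonneg:
  assumes "\<And>k. 0 \<le> c k" shows "0 \<le> stepf c s K x"
  unfolding stepf_def using assms by (intro sum_nonneg) auto

lemma stepf_rc:
  assumes c: "\<And>k. 0 \<le> c k" shows "\<exists>u>t. stepf c s K u = stepf c s K t"
proof (induction K)
  case 0
  show ?case by (auto simp: stepf_def intro: exI[of _ "t+1"])
next
  case (Suc K)
  obtain u1 where u1: "u1 > t" "stepf c s K u1 = stepf c s K t" using Suc by blast
  obtain u2 where u2: "u2 > t" "(u2 < s K) = (t < s K)"
  proof (cases "t < s K")
    case True then show ?thesis using that[of "(t + s K)/2"] by auto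
  next
    case False then show ?thesis using that[of "t + 1"] by auto
  qed
  define u where "u = min u1 u2"
  have "stepf c s K u = stepf c s K t"
  proof (rule antisym)
    show "stepf c s K u \<le> stepf c s K t" using u1 u2 by (intro stepf_anti c) (auto simp: u_def)
    have "stepf c s K u1 \<le> stepf c s K u" by (intro stepf_anti c) (auto simp: u_def)
    then show "stepf c s K t \<le> stepf c s K u" using u1 by simp
  qed
  moreover have "(u < s K) = (t < s K)" using u1 u2 unfolding u_def by auto
  ultimately have "stepf c s (Suc K) u = stepf c s (Suc K) t" by (simp add: stepf_def)
  moreover have "u > t" using u1 u2 by (simp add: u_def)
  ultimately show ?case by blast
qed

lemma testf_meas:
  assumes "\<And>k. 0 \<le> c k" shows "testf c s K \<in> borel_measurable lebesgue"
  unfolding testf_def[abs_def] by (rule radial_meas) (rule stepf_anti[OF assms])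

lemma rearr_testf:
  assumes "\<And>k. 0 \<le> c k" "0 < t"
  shows "rearr (testf c s K :: 'a::euclidean_space \<Rightarrow> real) t = ennreal (stepf c s K t)"
  unfolding testf_def[abs_def]
  by (rule rearr_radial[where 'a='a]) (auto intro: stepf_anti stepf_nonneg stepf_rc assms)

lemma stepf_ind:
  assumes c: "\<And>k. 0 \<le> c k" and sp: "\<And>k. 0 < s k" and t: "0 < t"
  shows "ennreal (stepf c s K x) * indicator {0<..<t} x = (\<Sum>k<K. ennreal (c k) * indicator {0<..<min t (s k)} x)"
proof (cases "0 < x \<and> x < t")
  case True
  have "ennreal (stepf c s K x) = (\<Sum>k<K. ennreal (c k * (if x < s k then 1 else 0)))"
    unfolding stepf_def using c by (subst sum_ennreal) auto
  also have "\<dots> = (\<Sum>k<K. ennreal (c k) * indicator {0<..<min t (s k)} x)"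
    using True by (intro sum.cong) (auto simp: indicator_def)
  finally show ?thesis using True by simp
next
  case False
  then show ?thesis by (auto simp: indicator_def)
qed

lemma int_stepf:
  assumes c: "\<And>k. 0 \<le> c k" and sp: "\<And>k. 0 < s k" and t: "0 < t"
  shows "(\<integral>\<^sup>+ x\<in>{0<..<t}. ennreal (stepf c s K x) \<partial>lborel) = ennreal (\<Sum>k<K. c k * min t (s k))"
proof -
  have "(\<integral>\<^sup>+ x\<in>{0<..<t}. ennreal (stepf c s K x) \<partial>lborel)
      = (\<integral>\<^sup>+ x. (\<Sum>k<K. ennreal (c k) * indicator {0<..<min t (s k)} x) \<partial>lborel)"
    using stepf_ind[OF c sp t] by simp
  also have "\<dots> = (\<Sum>k<K. \<integral>\<^sup>+ x. ennreal (c k) * indicator {0<..<min t (s k)} x \<partial>lborel)"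
    by (rule nn_integral_sum) simp
  also have "\<dots> = (\<Sum>k<K. ennreal (c k) * ennreal (min t (s k)))"
  proof (intro sum.cong refl)
    fix k
    have "0 \<le> min t (s k)" using sp[of k] t by simp
    then show "(\<integral>\<^sup>+ x. ennreal (c k) * indicator {0<..<min t (s k)} x \<partial>lborel) = ennreal (c k) * ennreal (min t (s k))"
      by (simp add: nn_integral_cmult_indicator)
  qed
  also have "\<dots> = ennreal (\<Sum>k<K. c k * min t (s k))"
  proof -
    have "\<And>k. 0 \<le> c k * min t (s k)" using c sp t by (simp add: less_imp_le)
    moreover have "\<And>k. ennreal (c k) * ennreal (min t (s k)) = ennreal (c k * min t (s k))"
      using c sp t by (simp add: ennreal_mult less_imp_le)
    ultimately show ?thesis by (subst sum_ennreal[symmetric]) auto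
  qed
  finally show ?thesis .
qed

lemma max_rearr_testf:
  assumes c: "\<And>k. 0 \<le> c k" and sp: "\<And>k. 0 < s k" and t: "0 < t"
  shows "max_rearr (testf c s K :: 'a::euclidean_space \<Rightarrow> real) t = ennreal ((\<Sum>k<K. c k * min t (s k)) / t)"
proof -
  have "(\<integral>\<^sup>+ x\<in>{0<..<t}. rearr (testf c s K :: 'a \<Rightarrow> real) x \<partial>lborel)
      = (\<integral>\<^sup>+ x\<in>{0<..<t}. ennreal (stepf c s K x) \<partial>lborel)"
    using rearr_testf[OF c] by (intro nn_integral_cong) (auto simp: indicator_def)
  also have "\<dots> = ennreal (\<Sum>k<K. c k * min t (s k))" by (rule int_stepf[OF c sp t])
  moreover have "0 \<le> (\<Sum>k<K. c k * min t (s k))"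
    using c sp t by (intro sum_nonneg mult_nonneg_nonneg) (auto simp: less_imp_le)
  ultimately show ?thesis unfolding max_rearr_def using t
    by (simp add: ennreal_mult[symmetric])
qed

definition RI :: "('a::euclidean_space \<Rightarrow> real) \<Rightarrow> real \<Rightarrow> ennreal" where
  "RI f t = (\<integral>\<^sup>+ x\<in>{0<..<t}. rearr f x \<partial>lborel)"

lemma MR_eq: "max_rearr f t = ennreal (1/t) * RI f t"
  unfolding max_rearr_def RI_def ..

lemma RI_mono: "t \<le> t' \<Longrightarrow> RI f t \<le> RI f t'"
  unfolding RI_def by (intro nn_integral_mono) (auto simp: indicator_def)

lemma RI_lower: assumes "0 < t" shows "ennreal t * rearr f t \<le> RI f t"
proof -
  have "ennreal t * rearr f t = (\<integral>\<^sup>+ x. rearr f t * indicator {0<..<t} x \<partial>lborel)"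
    using assms by (simp add: nn_integral_cmult_indicator mult.commute)
  also have "\<dots> \<le> RI f t" unfolding RI_def
    by (intro nn_integral_mono) (auto simp: indicator_def intro: rearr_antitone)
  finally show ?thesis .
qed

lemma RI_split: assumes "0 < s" "s \<le> t" shows "RI f t \<le> RI f s + ennreal (t - s) * rearr f s"
proof -
  have "RI f t \<le> (\<integral>\<^sup>+ x. rearr f x * indicator {0<..<s} x + rearr f s * indicator {s..<t} x \<partial>lborel)"
    unfolding RI_def
    by (intro nn_integral_mono) (auto simp: indicator_def intro: rearr_antitone)
  also have "\<dots> = RI f s + (\<integral>\<^sup>+ x. rearr f s * indicator {s..<t} x \<partial>lborel)"
    unfolding RI_def by (subst nn_integral_add) auto
  also have "(\<integral>\<^sup>+ x. rearr f s * indicator {s..<t} x \<partial>lborel) = ennreal (t - s) * rearr f s"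
    using assms by (simp add: nn_integral_cmult_indicator mult.commute)
  finally show ?thesis .
qed

lemma MR_tI: assumes "0 < t" shows "ennreal t * max_rearr f t = RI f t"
  unfolding MR_eq using assms
  by (simp add: mult.assoc[symmetric] ennreal_mult[symmetric])

lemma MR_ge_rearr: assumes "0 < t" shows "rearr f t \<le> max_rearr f t"
proof -
  have "rearr f t = ennreal (1/t) * (ennreal t * rearr f t)"
    using assms by (simp add: mult.assoc[symmetric] ennreal_mult[symmetric])
  also have "\<dots> \<le> max_rearr f t" unfolding MR_eq
    by (intro mult_left_mono RI_lower assms) simp
  finally show ?thesis .
qed

lemma MR_anti: assumes "0 < s" "s \<le> t" shows "max_rearr f t \<le> max_rearr f s"
proof -
  have t: "0 < t" using assms by simp
  have "ennreal (t - s) * rearr f s = ennreal ((t - s) / s) * (ennreal s * rearr f s)"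
    using assms by (simp add: mult.assoc[symmetric] ennreal_mult[symmetric])
  also have "\<dots> \<le> ennreal ((t - s) / s) * RI f s"
    by (intro mult_left_mono RI_lower assms) simp
  finally have "RI f t \<le> RI f s + ennreal ((t - s) / s) * RI f s"
    using RI_split[OF assms, of f] by (meson add_left_mono order_trans)
  also have "\<dots> = ennreal (t / s) * RI f s"
  proof -
    have "RI f s + ennreal ((t - s) / s) * RI f s = (1 + ennreal ((t - s) / s)) * RI f s"
      by (simp add: distrib_right)
    also have "1 + ennreal ((t - s) / s) = ennreal (t / s)"
    proof -
      have "t / s = 1 + (t - s) / s" using assms by (simp add: field_simps)
      then have "ennreal (t / s) = ennreal 1 + ennreal ((t - s) / s)"
        using assms by (simp only:) (rule ennreal_plus, simp_all)
      then show ?thesis by simp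
    qed
    finally show ?thesis .
  qed
  finally have "ennreal (1/t) * RI f t \<le> ennreal (1/t) * (ennreal (t / s) * RI f s)"
    by (rule mult_left_mono) simp
  also have "\<dots> = ennreal (1/s) * RI f s"
    using assms t by (simp add: mult.assoc[symmetric] ennreal_mult[symmetric])
  finally show ?thesis unfolding MR_eq .
qed

lemma MR_half: assumes "0 < a" shows "ennreal (1/2) * max_rearr f a \<le> max_rearr f (2*a)"
proof -
  have e: "ennreal (1/(2*a)) = ennreal (1/2) * ennreal (1/a)"
    using assms by (subst ennreal_mult[symmetric]) auto
  have "ennreal (1/2) * max_rearr f a = ennreal (1/(2*a)) * RI f a"
    by (simp only: MR_eq e mult.assoc)
  also have "\<dots> \<le> ennreal (1/(2*a)) * RI f (2*a)"
    using assms by (intro mult_left_mono RI_mono) auto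
  finally show ?thesis unfolding MR_eq .
qed

lemma epowr_ennreal: "0 \<le> x \<Longrightarrow> epowr (ennreal x) q = ennreal (x powr q)"
  unfolding epowr_def by simp

lemma epowr_zero[simp]: "epowr 0 q = 0"
  unfolding epowr_def by simp

lemma epowr_top[simp]: "epowr top q = top"
  unfolding epowr_def by simp

lemma epowr_mono: assumes "0 < q" "x \<le> y" shows "epowr x q \<le> epowr y q"
proof (cases "y = top")
  case True then show ?thesis by simp
next
  case False
  then have "x \<noteq> top" using assms top_unique by auto
  then show ?thesis using False assms unfolding epowr_def
    by (auto intro!: ennreal_leI powr_mono2 enn2real_mono simp: top.not_eq_extremum)
qed

lemma epowr_cmult: assumes "0 < c" shows "epowr (ennreal c * x) q = ennreal (c powr q) * epowr x q"
proof (cases "x = top")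
  case True then show ?thesis using assms by (simp add: ennreal_mult_top)
next
  case False
  then obtain r where r: "x = ennreal r" "0 \<le> r" by (cases x) auto
  then show ?thesis using assms
    by (simp add: ennreal_mult[symmetric] epowr_ennreal powr_mult)
qed

lemma epowr_inv: assumes "0 < q" shows "epowr (epowr x q) (1/q) = x"
proof (cases "x = top")
  case True then show ?thesis by simp
next
  case False
  then obtain r where r: "x = ennreal r" "0 \<le> r" by (cases x) auto
  then show ?thesis using assms
    by (simp add: epowr_ennreal powr_powr)
qed

lemma epowr_inv_le:
  assumes "0 < q" "epowr X (1/q) \<le> ennreal Y" "0 \<le> Y"
  shows "X \<le> ennreal (Y powr q)"
proof -
  have "X = epowr (epowr X (1/q)) (1/(1/q))" using epowr_inv[of "1/q" X] assms by simp
  also have "\<dots> \<le> epowr (ennreal Y) (1/(1/q))" using assms by (intro epowr_mono) auto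
  also have "\<dots> = ennreal (Y powr q)" using assms by (simp add: epowr_ennreal)
  finally show ?thesis .
qed

lemma geo_v:
  fixes v :: "nat \<Rightarrow> real"
  assumes "\<And>k. 2 * v k \<le> v (Suc k)" "\<And>k. 0 \<le> v k"
  shows "(\<Sum>k<Suc m. v k) \<le> 2 * v m"
proof (induction m)
  case 0 then show ?case using assms by simp
next
  case (Suc m)
  have "(\<Sum>k<Suc (Suc m). v k) = (\<Sum>k<Suc m. v k) + v (Suc m)" by simp
  also have "\<dots> \<le> 2 * v m + v (Suc m)" using Suc by simp
  also have "\<dots> \<le> 2 * v (Suc m)" using assms(1)[of m] by simp
  finally show ?case .
qed

lemma geo_u:
  fixes u :: "nat \<Rightarrow> real"
  assumes "\<And>k. 2 * u (Suc k) \<le> u k" "\<And>k. 0 \<le> u k"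
  shows "(\<Sum>k<m. u (j + k)) + 2 * u (j + m) \<le> 2 * u j"
proof (induction m)
  case 0 then show ?case by simp
next
  case (Suc m)
  have "(\<Sum>k<Suc m. u (j + k)) + 2 * u (j + Suc m) = (\<Sum>k<m. u (j + k)) + u (j + m) + 2 * u (Suc (j + m))" by simp
  also have "\<dots> \<le> (\<Sum>k<m. u (j + k)) + 2 * u (j + m)" using assms(1)[of "j+m"] by simp
  also have "\<dots> \<le> 2 * u j" using Suc .
  finally show ?case .
qed

lemma geo_main:
  fixes u v :: "nat \<Rightarrow> real"
  assumes u0: "\<And>k. 0 \<le> u k" and v0: "\<And>k. 0 \<le> v k"
    and uh: "\<And>k. 2 * u (Suc k) \<le> u k" and vd: "\<And>k. 2 * v k \<le> v (Suc k)"
    and K: "0 < K"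
  shows "\<exists>j<K. (\<Sum>k<K. min (u k) (v k)) \<le> 4 * min (u j) (v j)"
proof -
  have uanti: "u k \<le> u k'" if "k' \<le> k" for k k'
  proof -
    have "\<And>n. u (Suc n) \<le> u n" using uh u0 by (smt (verit))
    then show ?thesis using that by (rule lift_Suc_antimono_le)
  qed
  have vmono: "v k' \<le> v k" if "k' \<le> k" for k k'
  proof -
    have "\<And>n. v n \<le> v (Suc n)" using vd v0 by (smt (verit))
    then show ?thesis using that by (rule lift_Suc_mono_le)
  qed
  define j0 where "j0 = (LEAST k. K \<le> k \<or> u k < v k)"
  have j0K: "j0 \<le> K" unfolding j0_def by (rule Least_le) simp
  have below: "v k \<le> u k" if "k < j0" for k
    using not_less_Least[OF that[unfolded j0_def]] by auto
  have above: "u k < v k" if "j0 \<le> k" "k < K" for k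
  proof -
    have "K \<le> j0 \<or> u j0 < v j0" unfolding j0_def by (rule LeastI[of _ K]) simp
    then have "u j0 < v j0" using that by auto
    then show ?thesis using uanti[OF that(1)] vmono[OF that(1)] by simp
  qed
  have split: "(\<Sum>k<K. min (u k) (v k)) = (\<Sum>k<j0. min (u k) (v k)) + (\<Sum>k\<in>{j0..<K}. min (u k) (v k))"
    using j0K by (simp add: lessThan_atLeast0 sum.atLeastLessThan_concat)
  have s1: "(\<Sum>k<j0. min (u k) (v k)) \<le> (if j0 = 0 then 0 else 2 * min (u (j0 - 1)) (v (j0 - 1)))"
  proof (cases "j0 = 0")
    case True then show ?thesis by simp
  next
    case False
    then obtain m where m: "j0 = Suc m" by (cases j0) auto
    have "(\<Sum>k<j0. min (u k) (v k)) = (\<Sum>k<Suc m. v k)"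
      using below m by (intro sum.cong) (auto simp: min_def dest: antisym)
    also have "\<dots> \<le> 2 * v m" by (rule geo_v[of v, OF vd v0])
    also have "v m = min (u m) (v m)" using below[of m] m by simp
    finally show ?thesis using m by simp
  qed
  have s2: "(\<Sum>k\<in>{j0..<K}. min (u k) (v k)) \<le> (if j0 = K then 0 else 2 * min (u j0) (v j0))"
  proof (cases "j0 = K")
    case True then show ?thesis by simp
  next
    case False
    have "(\<Sum>k\<in>{j0..<K}. min (u k) (v k)) = (\<Sum>k\<in>{j0..<K}. u k)"
      using above by (intro sum.cong) (auto simp: min_def less_imp_le)
    also have "\<dots> = (\<Sum>k<K - j0. u (j0 + k))"
    proof -
      have "{j0..<K} = (\<lambda>k. j0 + k) ` {..<K - j0}"
      proof
        show "{j0..<K} \<subseteq> (\<lambda>k. j0 + k) ` {..<K - j0}"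
        proof
          fix x assume "x \<in> {j0..<K}"
          then show "x \<in> (\<lambda>k. j0 + k) ` {..<K - j0}" by (intro image_eqI[of _ _ "x - j0"]) auto
        qed
      qed auto
      then show ?thesis by (simp add: sum.reindex)
    qed
    also have "\<dots> \<le> 2 * u j0" using geo_u[of u, OF uh u0, where m="K - j0" and j=j0] u0[of "j0 + (K - j0)"] by simp
    also have "u j0 = min (u j0) (v j0)" using above[of j0] False j0K by simp
    finally show ?thesis using False by simp
  qed
  have m0: "0 \<le> min (u k) (v k)" for k using u0 v0 by simp
  have tot: "(\<Sum>k<K. min (u k) (v k)) \<le> (if j0 = 0 then 0 else 2 * min (u (j0 - 1)) (v (j0 - 1)))
      + (if j0 = K then 0 else 2 * min (u j0) (v j0))"
    using split s1 s2 by linarith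
  show ?thesis
  proof (cases "j0 = 0")
    case True
    then have "(\<Sum>k<K. min (u k) (v k)) \<le> 2 * min (u 0) (v 0)" using tot K by simp
    then show ?thesis using K m0[of 0] by (intro exI[of _ 0]) auto
  next
    case False
    note F = False
    show ?thesis
    proof (cases "j0 = K")
      case True
      then have "(\<Sum>k<K. min (u k) (v k)) \<le> 2 * min (u (j0 - 1)) (v (j0 - 1))" using tot F by simp
      then show ?thesis using F True m0[of "j0 - 1"] by (intro exI[of _ "j0 - 1"]) auto
    next
      case False
      then have T: "(\<Sum>k<K. min (u k) (v k)) \<le> 2 * min (u (j0 - 1)) (v (j0 - 1)) + 2 * min (u j0) (v j0)"
        using tot F by simp
      show ?thesis
      proof (cases "min (u (j0 - 1)) (v (j0 - 1)) \<le> min (u j0) (v j0)")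
        case True
        then have "(\<Sum>k<K. min (u k) (v k)) \<le> 4 * min (u j0) (v j0)" using T by linarith
        then show ?thesis using False j0K by (intro exI[of _ j0]) auto
      next
        case False2: False
        then have "(\<Sum>k<K. min (u k) (v k)) \<le> 4 * min (u (j0 - 1)) (v (j0 - 1))" using T by linarith
        then show ?thesis using F False j0K by (intro exI[of _ "j0 - 1"]) auto
      qed
    qed
  qed
qed

locale dw =
  fixes w :: "real \<Rightarrow> real"
  assumes dec: "decreasing_weight w" and fin: "\<forall>t>0. Wprim w t < \<infinity>"
begin

definition w0 :: "real \<Rightarrow> real" where "w0 x = indicator {0<..} x * w x"

definition Wr :: "real \<Rightarrow> real" where "Wr t = enn2real (Wprim w t)"

lemma w_nonneg: "0 < t \<Longrightarrow> 0 \<le> w t"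
  using dec unfolding decreasing_weight_def is_weight_def by auto

lemma w_anti: "0 < s \<Longrightarrow> s \<le> t \<Longrightarrow> w t \<le> w s"
  using dec unfolding decreasing_weight_def by auto

lemma w_anti_e: "0 < s \<Longrightarrow> s \<le> t \<Longrightarrow> ennreal (w t) \<le> ennreal (w s)"
  by (rule ennreal_leI) (rule w_anti)

lemma w0_nonneg: "0 \<le> w0 x"
  unfolding w0_def using w_nonneg by (auto simp: indicator_def)

lemma w0_meas[measurable]: "w0 \<in> borel_measurable borel"
proof -
  have "(\<lambda>x. indicator {0<..} x *\<^sub>R w x) \<in> borel_measurable lborel"
    using dec unfolding decreasing_weight_def is_weight_def set_borel_measurable_def by auto
  then show ?thesis unfolding w0_def[abs_def] by simp
qed

lemma Wprim_eq: "Wprim w t = (\<integral>\<^sup>+ x. ennreal (w0 x) * indicator {0<..<t} x \<partial>lborel)"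
  unfolding Wprim_def w0_def by (intro nn_integral_cong) (auto simp: indicator_def)

lemma Wprim_fin: "Wprim w t < \<infinity>"
proof (cases "0 < t")
  case True then show ?thesis using fin by auto
next
  case False
  then have "{0<..<t} = {}" by auto
  then show ?thesis unfolding Wprim_def by simp
qed

lemma Wr_nonneg: "0 \<le> Wr t" unfolding Wr_def by simp

lemma W_eq: "Wprim w t = ennreal (Wr t)"
  unfolding Wr_def using Wprim_fin[of t] by (simp add: less_top[symmetric])

lemma W_mono_e: "s \<le> t \<Longrightarrow> Wprim w s \<le> Wprim w t"
  unfolding Wprim_eq by (intro nn_integral_mono) (auto simp: indicator_def)

lemma W_mono: "s \<le> t \<Longrightarrow> Wr s \<le> Wr t"
  using W_mono_e[of s t] unfolding W_eq by (simp add: Wr_nonneg)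

lemma W_lower: assumes "0 < t" shows "t * w t \<le> Wr t"
proof -
  have "ennreal (t * w t) = (\<integral>\<^sup>+ x. ennreal (w t) * indicator {0<..<t} x \<partial>lborel)"
    using assms w_nonneg[OF assms] by (simp add: nn_integral_cmult_indicator ennreal_mult mult.commute)
  also have "\<dots> \<le> Wprim w t" unfolding Wprim_eq
    by (intro nn_integral_mono) (auto simp: indicator_def w0_def intro!: w_anti_e)
  finally show ?thesis unfolding W_eq using Wr_nonneg by simp
qed

lemma W_split: assumes "0 < s" "s \<le> t" shows "Wr t \<le> Wr s + (t - s) * w s"
proof -
  have "Wprim w t \<le> (\<integral>\<^sup>+ x. ennreal (w0 x) * indicator {0<..<s} x + ennreal (w s) * indicator {s..<t} x \<partial>lborel)"
    unfolding Wprim_eq using assms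
    by (intro nn_integral_mono) (auto simp: indicator_def w0_def intro!: w_anti_e)
  also have "\<dots> = Wprim w s + (\<integral>\<^sup>+ x. ennreal (w s) * indicator {s..<t} x \<partial>lborel)"
    unfolding Wprim_eq by (subst nn_integral_add) auto
  also have "(\<integral>\<^sup>+ x. ennreal (w s) * indicator {s..<t} x \<partial>lborel) = ennreal ((t - s) * w s)"
    using assms w_nonneg[OF assms(1)] by (simp add: nn_integral_cmult_indicator ennreal_mult mult.commute)
  finally have "ennreal (Wr t) \<le> ennreal (Wr s + (t - s) * w s)"
    unfolding W_eq using assms w_nonneg[OF assms(1)] Wr_nonneg by (simp add: ennreal_plus[symmetric] del: ennreal_plus)
  then show ?thesis using assms w_nonneg[OF assms(1)] Wr_nonneg by (subst (asm) ennreal_le_iff) auto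
qed

lemma W_ratio: assumes "0 < s" "s \<le> t" shows "s * Wr t \<le> t * Wr s"
proof -
  have 1: "s * Wr t \<le> s * Wr s + s * ((t - s) * w s)"
    using W_split[OF assms] assms by (simp add: distrib_left[symmetric])
  have "s * w s \<le> Wr s" using W_lower assms by simp
  then have "(t - s) * (s * w s) \<le> (t - s) * Wr s" using assms by (intro mult_left_mono) auto
  then show ?thesis using 1 by (simp add: algebra_simps)
qed

lemma W_upper: assumes "\<And>x. 0 < x \<Longrightarrow> w x \<le> B" "0 \<le> t" shows "Wr t \<le> B * t"
proof -
  have B: "0 \<le> B" using assms(1)[of 1] w_nonneg[of 1] by simp
  have "Wprim w t \<le> (\<integral>\<^sup>+ x. ennreal B * indicator {0<..<t} x \<partial>lborel)"
    unfolding Wprim_eq using assms(1) by (intro nn_integral_mono) (auto simp: indicator_def w0_def ennreal_leI)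
  also have "\<dots> = ennreal (B * t)" using assms B by (simp add: nn_integral_cmult_indicator ennreal_mult)
  finally show ?thesis unfolding W_eq using B assms by simp
qed

lemma Lambda_eq: "Lambda1_norm w f = (\<integral>\<^sup>+ t. rearr f t * ennreal (w0 t) \<partial>lborel)"
  unfolding Lambda1_norm_def w0_def by (intro nn_integral_cong) (auto simp: indicator_def)

end

lemma comparable_via:
  fixes N1 N2 X :: "'b \<Rightarrow> ennreal"
  assumes c: "0 < c1" "0 < c2" "0 < c3" "0 < c4"
    and h: "\<And>x. P x \<Longrightarrow> N1 x \<le> ennreal c1 * X x \<and> ennreal c2 * X x \<le> N1 x \<and>
                          N2 x \<le> ennreal c3 * X x \<and> ennreal c4 * X x \<le> N2 x"
  shows "\<exists>C::real. C > 0 \<and> (\<forall>x. P x \<longrightarrow> N1 x \<le> ennreal C * N2 x \<and> N2 x \<le> ennreal C * N1 x)"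
proof (intro exI[of _ "c1 / c4 + c3 / c2 + 1"] conjI allI impI)
  show "0 < c1 / c4 + c3 / c2 + 1" using c by (simp add: add_pos_pos)
  fix x assume P: "P x"
  note hx = h[OF P]
  have "N1 x \<le> ennreal c1 * X x" using hx by simp
  also have "\<dots> = ennreal (c1 / c4) * (ennreal c4 * X x)"
    using c by (simp add: mult.assoc[symmetric] ennreal_mult[symmetric])
  also have "\<dots> \<le> ennreal (c1 / c4) * N2 x" using hx by (intro mult_left_mono) auto
  also have "\<dots> \<le> ennreal (c1 / c4 + c3 / c2 + 1) * N2 x"
    using c by (intro mult_right_mono ennreal_leI) auto
  finally show "N1 x \<le> ennreal (c1 / c4 + c3 / c2 + 1) * N2 x" .
  have "N2 x \<le> ennreal c3 * X x" using hx by simp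
  also have "\<dots> = ennreal (c3 / c2) * (ennreal c2 * X x)"
    using c by (simp add: mult.assoc[symmetric] ennreal_mult[symmetric])
  also have "\<dots> \<le> ennreal (c3 / c2) * N1 x" using hx by (intro mult_left_mono) auto
  also have "\<dots> \<le> ennreal (c1 / c4 + c3 / c2 + 1) * N1 x"
    using c by (intro mult_right_mono ennreal_leI) auto
  finally show "N2 x \<le> ennreal (c1 / c4 + c3 / c2 + 1) * N1 x" .
qed

locale dwb = dw +
  fixes B :: real
  assumes bnd: "\<And>x. 0 < x \<Longrightarrow> w x \<le> B"
    and intg: "set_integrable lborel {0<..} w"
begin

definition Ae :: ennreal where "Ae = (\<integral>\<^sup>+ x. ennreal (w0 x) \<partial>lborel)"
definition A :: real where "A = enn2real Ae"

lemma B_nonneg: "0 \<le> B" using bnd[of 1] w_nonneg[of 1] by simp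

lemma Ae_fin: "Ae < \<infinity>"
proof -
  have "integrable lborel w0"
    using intg unfolding set_integrable_def w0_def[abs_def] by simp
  then have "(\<integral>\<^sup>+ x. ennreal (norm (w0 x)) \<partial>lborel) < \<infinity>" using integrable_iff_bounded by blast
  then show ?thesis unfolding Ae_def using w0_nonneg by simp
qed

lemma Ae_eq: "Ae = ennreal A"
  unfolding A_def using Ae_fin by (simp add: less_top[symmetric])

lemma A_nonneg: "0 \<le> A" unfolding A_def by simp

lemma W_le_A: "Wr t \<le> A"
proof -
  have "Wprim w t \<le> Ae" unfolding Wprim_eq Ae_def
    by (intro nn_integral_mono) (auto simp: indicator_def)
  then show ?thesis unfolding W_eq Ae_eq using A_nonneg by simp
qed

lemma Lambda_upper: assumes a: "0 < a"
  shows "Lambda1_norm w f \<le> ennreal (B * a + A) * max_rearr f a"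
proof -
  have "Lambda1_norm w f \<le> (\<integral>\<^sup>+ t. ennreal B * (rearr f t * indicator {0<..<a} t) + rearr f a * ennreal (w0 t) \<partial>lborel)"
    unfolding Lambda_eq
  proof (intro nn_integral_mono)
    fix t
    show "rearr f t * ennreal (w0 t) \<le> ennreal B * (rearr f t * indicator {0<..<a} t) + rearr f a * ennreal (w0 t)"
    proof (cases "t \<le> 0")
      case True then show ?thesis by (simp add: w0_def)
    next
      case False
      show ?thesis
      proof (cases "t < a")
        case True
        have "rearr f t * ennreal (w0 t) \<le> rearr f t * ennreal B"
          using False bnd[of t] by (intro mult_left_mono ennreal_leI) (auto simp: w0_def)
        then show ?thesis using False True by (simp add: mult.commute add_increasing2)
      next
        case False2: False
        have "rearr f t * ennreal (w0 t) \<le> rearr f a * ennreal (w0 t)"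
          using False2 by (intro mult_right_mono rearr_antitone) auto
        then show ?thesis by (simp add: add_increasing)
      qed
    qed
  qed
  also have "\<dots> = ennreal B * RI f a + rearr f a * Ae"
    unfolding RI_def Ae_def
    by (subst nn_integral_add) (auto simp: nn_integral_cmult)
  also have "\<dots> \<le> ennreal B * (ennreal a * max_rearr f a) + max_rearr f a * ennreal A"
    unfolding MR_tI[OF a] Ae_eq by (intro add_mono mult_right_mono MR_ge_rearr a) auto
  also have "\<dots> = ennreal (B * a + A) * max_rearr f a"
  proof -
    have "ennreal (B * a + A) = ennreal B * ennreal a + ennreal A"
      using a B_nonneg A_nonneg by (simp add: ennreal_mult)
    then show ?thesis by (simp add: algebra_simps)
  qed
  finally show ?thesis .
qed

lemma Lambda_lower: assumes a: "0 < a"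
  shows "ennreal (a * w a) * max_rearr f a \<le> Lambda1_norm w f"
proof -
  have "ennreal (a * w a) * max_rearr f a = ennreal (w a) * RI f a"
    unfolding MR_tI[OF a, symmetric] using a w_nonneg[OF a]
    by (simp add: ennreal_mult mult.assoc mult.commute mult.left_commute)
  also have "\<dots> = (\<integral>\<^sup>+ t. ennreal (w a) * (rearr f t * indicator {0<..<a} t) \<partial>lborel)"
    unfolding RI_def by (subst nn_integral_cmult) auto
  also have "\<dots> \<le> Lambda1_norm w f"
    unfolding Lambda_eq
    by (intro nn_integral_mono) (auto simp: indicator_def w0_def mult.commute intro!: mult_left_mono w_anti_e)
  finally show ?thesis .
qed


lemma G1_upper: assumes a: "0 < a"
  shows "Gamma1inf_norm w f \<le> ennreal (B * a + A) * max_rearr f a"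
  unfolding Gamma1inf_norm_def
proof (rule SUP_least)
  fix t :: real assume "t \<in> {0<..}"
  then have t: "0 < t" by simp
  show "max_rearr f t * Wprim w t \<le> ennreal (B * a + A) * max_rearr f a"
  proof (cases "t \<le> a")
    case True
    have "max_rearr f t * Wprim w t \<le> max_rearr f t * ennreal (B * t)"
      unfolding W_eq using W_upper[OF bnd, of t] t by (intro mult_left_mono ennreal_leI) auto
    also have "\<dots> = ennreal B * RI f t"
      unfolding MR_tI[OF t, symmetric] using t B_nonneg by (simp add: ennreal_mult algebra_simps)
    also have "\<dots> \<le> ennreal B * RI f a" using True by (intro mult_left_mono RI_mono) auto
    also have "\<dots> = ennreal (B * a) * max_rearr f a"
      unfolding MR_tI[OF a, symmetric] using a B_nonneg by (simp add: ennreal_mult algebra_simps)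
    also have "\<dots> \<le> ennreal (B * a + A) * max_rearr f a"
      using A_nonneg by (intro mult_right_mono ennreal_leI) auto
    finally show ?thesis .
  next
    case False
    have "max_rearr f t * Wprim w t \<le> max_rearr f a * ennreal A"
      unfolding W_eq using False a W_le_A by (intro mult_mono MR_anti ennreal_leI) auto
    also have "\<dots> \<le> ennreal (B * a + A) * max_rearr f a"
      using a B_nonneg by (subst mult.commute) (intro mult_right_mono ennreal_leI, auto)
    finally show ?thesis .
  qed
qed

lemma G1_lower: assumes a: "0 < a"
  shows "ennreal (a * w a) * max_rearr f a \<le> Gamma1inf_norm w f"
proof -
  have "ennreal (a * w a) * max_rearr f a \<le> max_rearr f a * Wprim w a"
    unfolding W_eq using W_lower[OF a] a w_nonneg[OF a] by (subst mult.commute) (intro mult_left_mono ennreal_leI, auto)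
  also have "\<dots> \<le> Gamma1inf_norm w f" unfolding Gamma1inf_norm_def using a by (intro SUP_upper) auto
  finally show ?thesis .
qed

end

definition va :: "real \<Rightarrow> real \<Rightarrow> real" where "va a t = indicator {a<..<2*a} t"

lemma Gq_va_upper: assumes a: "0 < a" and q: "0 < q"
  shows "Gamma_norm q (va a) f \<le> ennreal (a powr (1/q)) * max_rearr f a"
proof -
  have "(\<integral>\<^sup>+ t\<in>{0<..}. epowr (max_rearr f t) q * ennreal (va a t) \<partial>lborel)
      \<le> (\<integral>\<^sup>+ t. epowr (max_rearr f a) q * indicator {a<..<2*a} t \<partial>lborel)"
    using a q by (intro nn_integral_mono) (auto simp: va_def indicator_def intro!: epowr_mono MR_anti)
  also have "\<dots> = ennreal a * epowr (max_rearr f a) q"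
    using a by (simp add: nn_integral_cmult_indicator mult.commute)
  finally have "Gamma_norm q (va a) f \<le> epowr (ennreal a * epowr (max_rearr f a) q) (1/q)"
    unfolding Gamma_norm_def using q by (intro epowr_mono) auto
  also have "\<dots> = ennreal (a powr (1/q)) * max_rearr f a"
    using a q by (simp add: epowr_cmult epowr_inv)
  finally show ?thesis .
qed

lemma Gq_va_lower: assumes a: "0 < a" and q: "0 < q"
  shows "ennreal ((a * (1/2) powr q) powr (1/q)) * max_rearr f a \<le> Gamma_norm q (va a) f"
proof -
  have "ennreal (a * (1/2) powr q) * epowr (max_rearr f a) q
      = (\<integral>\<^sup>+ t. epowr (ennreal (1/2) * max_rearr f a) q * indicator {a<..<2*a} t \<partial>lborel)"
  proof -
    have e: "epowr (ennreal (1/2) * max_rearr f a) q = ennreal ((1/2) powr q) * epowr (max_rearr f a) q"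
      by (rule epowr_cmult) simp
    have "(\<integral>\<^sup>+ t. epowr (ennreal (1/2) * max_rearr f a) q * indicator {a<..<2*a} t \<partial>lborel)
        = ennreal ((1/2) powr q) * epowr (max_rearr f a) q * emeasure lborel {a<..<2*a}"
      unfolding e by (rule nn_integral_cmult_indicator) simp
    also have "\<dots> = ennreal (a * (1/2) powr q) * epowr (max_rearr f a) q"
      using a by (simp add: ennreal_mult algebra_simps)
    finally show ?thesis by simp
  qed
  also have "\<dots> \<le> (\<integral>\<^sup>+ t\<in>{0<..}. epowr (max_rearr f t) q * ennreal (va a t) \<partial>lborel)"
  proof (intro nn_integral_mono)
    fix t
    show "epowr (ennreal (1/2) * max_rearr f a) q * indicator {a<..<2*a} t
        \<le> epowr (max_rearr f t) q * ennreal (va a t) * indicator {0<..} t"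
    proof (cases "a < t \<and> t < 2 * a")
      case True
      have "ennreal (1/2) * max_rearr f a \<le> max_rearr f (2*a)" by (rule MR_half[OF a])
      also have "\<dots> \<le> max_rearr f t" using True a by (intro MR_anti) auto
      finally have "epowr (ennreal (1/2) * max_rearr f a) q \<le> epowr (max_rearr f t) q"
        using q by (intro epowr_mono)
      then show ?thesis using True a by (simp add: va_def indicator_def)
    next
      case False then have "indicator {a<..<2*a} t = (0::ennreal)" by (auto simp: indicator_def)
      then show ?thesis by simp
    qed
  qed
  finally have "epowr (ennreal (a * (1/2) powr q) * epowr (max_rearr f a) q) (1/q) \<le> Gamma_norm q (va a) f"
    unfolding Gamma_norm_def using q by (intro epowr_mono) auto
  moreover have "epowr (ennreal (a * (1/2) powr q) * epowr (max_rearr f a) q) (1/q)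
      = ennreal ((a * (1/2) powr q) powr (1/q)) * max_rearr f a"
    using a q by (simp add: epowr_cmult epowr_inv)
  ultimately show ?thesis by simp
qed

lemma va_weight: assumes "0 < a" shows "is_weight (va a)"
  unfolding is_weight_def
proof (intro conjI allI impI)
  show "set_borel_measurable lborel {0<..} (va a)"
    unfolding set_borel_measurable_def va_def by simp
  fix t :: real show "0 \<le> va a t" by (simp add: va_def)
next
  fix x y :: real
  have "(\<lambda>t. indicator {x..y} t *\<^sub>R va a t) = indicator ({x..y} \<inter> {a<..<2*a})"
    by (auto simp: va_def indicator_def)
  moreover have "integrable lborel (indicator ({x..y} \<inter> {a<..<2*a}) :: real \<Rightarrow> real)"
  proof (rule integrable_real_indicator)
    have "emeasure lborel ({x..y} \<inter> {a<..<2*a}) \<le> emeasure lborel {a<..<2*a}"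
      by (intro emeasure_mono) auto
    also have "\<dots> < \<infinity>" using assms by simp
    finally show "emeasure lborel ({x..y} \<inter> {a<..<2*a}) < \<infinity>" .
  qed simp
  ultimately show "set_integrable lborel {x..y} (va a)" unfolding set_integrable_def by simp
qed


definition Rfun :: "real \<Rightarrow> real \<Rightarrow> real \<Rightarrow> ennreal" where
  "Rfun q a r = (\<integral>\<^sup>+ x\<in>{0<..<r}. ennreal (va a x) \<partial>lborel)
      + ennreal (r powr q) * (\<integral>\<^sup>+ x\<in>{r<..}. ennreal (va a x * x powr (-q)) \<partial>lborel)"

lemma Rfun_small:
  assumes a: "0 < a" and q: "0 < q" and r: "0 < r" "r \<le> a"
  shows "Rfun q a r \<le> ennreal (a powr (1-q) * r powr q)"
    and "ennreal (2 powr (-q) * a powr (1-q) * r powr q) \<le> Rfun q a r"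
proof -
  have z: "(\<integral>\<^sup>+ x\<in>{0<..<r}. ennreal (va a x) \<partial>lborel) = 0"
  proof -
    have "\<And>x. ennreal (va a x) * indicator {0<..<r} x = 0" using r by (auto simp: va_def indicator_def)
    then show ?thesis by (simp only:) simp
  qed
  have "(\<integral>\<^sup>+ x\<in>{r<..}. ennreal (va a x * x powr (-q)) \<partial>lborel)
      \<le> (\<integral>\<^sup>+ x. ennreal (a powr (-q)) * indicator {a<..<2*a} x \<partial>lborel)"
    using a q r by (intro nn_integral_mono) (auto simp: va_def indicator_def intro!: ennreal_leI powr_mono2')
  also have "\<dots> = ennreal (a powr (-q) * a)" using a by (simp add: nn_integral_cmult_indicator ennreal_mult)
  finally have "Rfun q a r \<le> ennreal (r powr q) * ennreal (a powr (-q) * a)"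
    unfolding Rfun_def z by (simp add: mult_left_mono)
  also have "\<dots> = ennreal (a powr (1-q) * r powr q)"
    using a by (simp add: ennreal_mult[symmetric] powr_diff powr_minus divide_inverse algebra_simps)
  finally show "Rfun q a r \<le> ennreal (a powr (1-q) * r powr q)" .
  have "ennreal ((2*a) powr (-q) * a) = (\<integral>\<^sup>+ x. ennreal ((2*a) powr (-q)) * indicator {a<..<2*a} x \<partial>lborel)"
    using a by (simp add: nn_integral_cmult_indicator ennreal_mult)
  also have "\<dots> \<le> (\<integral>\<^sup>+ x\<in>{r<..}. ennreal (va a x * x powr (-q)) \<partial>lborel)"
    using a q r by (intro nn_integral_mono) (auto simp: va_def indicator_def intro!: ennreal_leI powr_mono2')
  finally have "ennreal (r powr q) * ennreal ((2*a) powr (-q) * a) \<le> Rfun q a r"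
    unfolding Rfun_def z by (simp add: mult_left_mono)
  moreover have "ennreal (r powr q) * ennreal ((2*a) powr (-q) * a) = ennreal (2 powr (-q) * a powr (1-q) * r powr q)"
    using a by (simp add: ennreal_mult[symmetric] powr_diff powr_minus divide_inverse powr_mult algebra_simps)
  ultimately show "ennreal (2 powr (-q) * a powr (1-q) * r powr q) \<le> Rfun q a r" by simp
qed


lemma ratio_powr_bounds:
  fixes r x q :: real
  assumes "0 < r" "r < x" "x \<le> 2 * r" "0 < q"
  shows "2 powr (-q) \<le> r powr q * x powr (-q)" "r powr q * x powr (-q) \<le> 1"
proof -
  have e0: "r powr q * x powr (-q) = r powr q / x powr q" by (simp add: powr_minus divide_inverse)
  have e: "r powr q * x powr (-q) = (r / x) powr q"
    unfolding e0 using assms by (simp add: powr_divide)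
  have e2: "2 powr (-q) = (1/2) powr q" by (simp add: powr_minus powr_divide inverse_eq_divide)
  have "1/2 \<le> r / x" using assms by (simp add: field_simps)
  then show "2 powr (-q) \<le> r powr q * x powr (-q)" unfolding e e2 using assms by (intro powr_mono2) auto
  have "r / x \<le> 1" using assms by simp
  then have "(r / x) powr q \<le> 1 powr q" using assms by (intro powr_mono2) auto
  then show "r powr q * x powr (-q) \<le> 1" unfolding e by simp
qed

lemma two_powr_neg_le1: assumes "0 < q" shows "2 powr (-q) \<le> (1::real)"
proof -
  have "1 \<le> (2::real) powr q" using assms by (intro ge_one_powr_ge_zero) auto
  then show ?thesis by (simp add: powr_minus inverse_le_1_iff)
qed

lemma Rfun_integral:
  shows "Rfun q a r = (\<integral>\<^sup>+ x. ennreal (va a x) * indicator {0<..<r} x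
           + ennreal (r powr q) * (ennreal (va a x * x powr (-q)) * indicator {r<..} x) \<partial>lborel)"
  unfolding Rfun_def va_def
  by (subst nn_integral_add) (auto simp: nn_integral_cmult)

lemma Rfun_large:
  assumes a: "0 < a" and q: "0 < q" and r: "a < r"
  shows "Rfun q a r \<le> ennreal a"
    and "ennreal (2 powr (-q) * a) \<le> Rfun q a r"
proof -
  have "Rfun q a r \<le> (\<integral>\<^sup>+ x. indicator {a<..<2*a} x \<partial>lborel)"
    unfolding Rfun_integral
  proof (intro nn_integral_mono)
    fix x :: real
    show "ennreal (va a x) * indicator {0<..<r} x + ennreal (r powr q) * (ennreal (va a x * x powr (-q)) * indicator {r<..} x)
        \<le> indicator {a<..<2*a} x"
    proof (cases "a < x \<and> x < 2 * a")
      case nax: False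
      then have "va a x = 0" "indicator {a<..<2*a} x = (0::ennreal)" by (auto simp: va_def indicator_def)
      then show ?thesis by simp
    next
      case ax: True
      have v1: "va a x = 1" "indicator {a<..<2*a} x = (1::ennreal)" using ax by (auto simp: va_def indicator_def)
      show ?thesis
      proof (cases "x < r")
        case xr: True
        have "indicator {0<..<r} x = (1::ennreal)" "indicator {r<..} x = (0::ennreal)"
          using xr ax a by (auto simp: indicator_def)
        then show ?thesis using v1 by simp
      next
        case nxr: False
        show ?thesis
        proof (cases "x = r")
          case xe: True
          have "indicator {0<..<r} x = (0::ennreal)" "indicator {r<..} x = (0::ennreal)"
            using xe by (auto simp: indicator_def)
          then show ?thesis using v1 by simp
        next
          case nxe: False
          then have xr: "r < x" using nxr by simp
          have "indicator {0<..<r} x = (0::ennreal)" "indicator {r<..} x = (1::ennreal)"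
            using xr by (auto simp: indicator_def)
          moreover have "r powr q * x powr (-q) \<le> 1" using ratio_powr_bounds(2)[of r x q] xr ax a r q by simp
          then have "ennreal (r powr q) * ennreal (x powr (-q)) \<le> 1"
            by (simp add: ennreal_mult[symmetric] del: ennreal_mult)
          ultimately show ?thesis using v1 by simp
        qed
      qed
    qed
  qed
  also have "\<dots> = ennreal a" using a by simp
  finally show "Rfun q a r \<le> ennreal a" .
  have "ennreal (2 powr (-q) * a) = (\<integral>\<^sup>+ x. ennreal (2 powr (-q)) * indicator {a<..<2*a} x \<partial>lborel)"
    using a by (simp add: nn_integral_cmult_indicator ennreal_mult)
  also have "\<dots> \<le> Rfun q a r"
    unfolding Rfun_integral
  proof (intro nn_integral_mono_AE)
    show "AE x in lborel. ennreal (2 powr (-q)) * indicator {a<..<2*a} x \<le>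
        ennreal (va a x) * indicator {0<..<r} x + ennreal (r powr q) * (ennreal (va a x * x powr (-q)) * indicator {r<..} x)"
      using AE_lborel_singleton[of r]
    proof eventually_elim
      case (elim x)
      show ?case
      proof (cases "a < x \<and> x < 2 * a")
        case nax: False
        then have "indicator {a<..<2*a} x = (0::ennreal)" by (auto simp: indicator_def)
        then show ?thesis by simp
      next
        case ax: True
        have v1: "va a x = 1" "indicator {a<..<2*a} x = (1::ennreal)" using ax by (auto simp: va_def indicator_def)
        show ?thesis
        proof (cases "x < r")
          case xr: True
          have "indicator {0<..<r} x = (1::ennreal)" "indicator {r<..} x = (0::ennreal)"
            using xr ax a by (auto simp: indicator_def)
          then show ?thesis using v1 two_powr_neg_le1[OF q] by simp
        next
          case nxr: False
          then have xr: "r < x" using elim by simp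
          have "indicator {0<..<r} x = (0::ennreal)" "indicator {r<..} x = (1::ennreal)"
            using xr by (auto simp: indicator_def)
          moreover have "2 powr (-q) \<le> r powr q * x powr (-q)" using ratio_powr_bounds(1)[of r x q] xr ax a r q by simp
          then have "ennreal (2 powr (-q)) \<le> ennreal (r powr q) * ennreal (x powr (-q))"
            by (simp add: ennreal_mult[symmetric] del: ennreal_mult)
          ultimately show ?thesis using v1 by simp
        qed
      qed
    qed
  qed
  finally show "ennreal (2 powr (-q) * a) \<le> Rfun q a r" .
qed

context dwb
begin

lemma fwd_G1:
  assumes a: "0 < a" "0 < w a"
  shows "space_eq (Lambda1_norm w :: ('a::euclidean_space \<Rightarrow> real) \<Rightarrow> ennreal) (Gamma1inf_norm w)"
proof -
  have p: "0 < a * w a" using a by simp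
  have "a * w a \<le> B * a" using bnd[of a] a by (simp add: mult.commute)
  then have p2: "0 < B * a + A" using p A_nonneg by linarith
  have "\<exists>C::real. C > 0 \<and> (\<forall>f. f \<in> borel_measurable lebesgue \<longrightarrow>
      (Lambda1_norm w :: ('a \<Rightarrow> real) \<Rightarrow> ennreal) f \<le> ennreal C * Gamma1inf_norm w f \<and> Gamma1inf_norm w f \<le> ennreal C * Lambda1_norm w f)"
    by (rule comparable_via[OF p2 p p2 p, where X="\<lambda>f. max_rearr f a"])
       (use Lambda_upper[OF a(1)] Lambda_lower[OF a(1)] G1_upper[OF a(1)] G1_lower[OF a(1)] in auto)
  then show ?thesis unfolding space_eq_def by blast
qed

lemma fwd_Gq:
  assumes a: "0 < a" "0 < w a" and q: "0 < q"
  shows "space_eq (Lambda1_norm w :: ('a::euclidean_space \<Rightarrow> real) \<Rightarrow> ennreal) (Gamma_norm q (va a))"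
proof -
  have p: "0 < a * w a" using a by simp
  have "a * w a \<le> B * a" using bnd[of a] a by (simp add: mult.commute)
  then have p2: "0 < B * a + A" using p A_nonneg by linarith
  have p3: "0 < a powr (1/q)" using a by simp
  have p4: "0 < (a * (1/2) powr q) powr (1/q)" using a by simp
  have "\<exists>C::real. C > 0 \<and> (\<forall>f. f \<in> borel_measurable lebesgue \<longrightarrow>
      (Lambda1_norm w :: ('a \<Rightarrow> real) \<Rightarrow> ennreal) f \<le> ennreal C * Gamma_norm q (va a) f \<and> Gamma_norm q (va a) f \<le> ennreal C * Lambda1_norm w f)"
    by (rule comparable_via[OF p2 p p3 p4, where X="\<lambda>f. max_rearr f a"])
       (use Lambda_upper[OF a(1)] Lambda_lower[OF a(1)] Gq_va_upper[OF a(1) q] Gq_va_lower[OF a(1) q] in auto)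
  then show ?thesis unfolding space_eq_def by blast
qed

lemma fwd_equiv:
  assumes a: "0 < a" "0 < w a" and q: "0 < q"
  shows "equiv_on_pos (\<lambda>r. epowr (Wprim w r) q)
               (\<lambda>r. (\<integral>\<^sup>+ x\<in>{0<..<r}. ennreal (va a x) \<partial>lborel)
                    + ennreal (r powr q) * (\<integral>\<^sup>+ x\<in>{r<..}. ennreal (va a x * x powr (-q)) \<partial>lborel))"
proof -
  define D where "D = max B (A / a)"
  have wB: "w a \<le> B" using bnd a by simp
  have D: "0 < D" using wB a unfolding D_def by linarith
  have c1: "0 < D powr q" using D by simp
  have c2: "0 < w a powr q" using a by simp
  have c3: "0 < a powr (1-q)" using a by simp
  have c4: "0 < 2 powr (-q) * a powr (1-q)" using a by simp
  have "\<exists>C::real. C > 0 \<and> (\<forall>r. 0 < r \<longrightarrow> epowr (Wprim w r) q \<le> ennreal C * Rfun q a r \<and> Rfun q a r \<le> ennreal C * epowr (Wprim w r) q)"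
  proof (rule comparable_via[OF c1 c2 c3 c4, where X="\<lambda>r. ennreal (min r a powr q)"])
    fix r :: real assume r: "0 < r"
    define m where "m = min r a"
    have m: "0 < m" using r a by (simp add: m_def)
    have up: "Wr r \<le> D * m"
    proof (cases "r \<le> a")
      case True
      have "Wr r \<le> B * r" using W_upper[OF bnd] r by simp
      also have "\<dots> \<le> D * r" using r unfolding D_def by (intro mult_right_mono) auto
      finally show ?thesis using True by (simp add: m_def)
    next
      case False
      have "Wr r \<le> A" by (rule W_le_A)
      also have "A = (A / a) * a" using a by simp
      also have "\<dots> \<le> D * a" using a unfolding D_def by (intro mult_right_mono) auto
      finally show ?thesis using False by (simp add: m_def)
    qed
    have lo: "w a * m \<le> Wr r"
    proof (cases "r \<le> a")
      case True
      have "w a * r \<le> w r * r" using w_anti[OF r True] r by (intro mult_right_mono) auto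
      also have "\<dots> \<le> Wr r" using W_lower[OF r] by (simp add: mult.commute)
      finally show ?thesis using True by (simp add: m_def)
    next
      case False
      have "w a * a \<le> Wr a" using W_lower[OF a(1)] by (simp add: mult.commute)
      also have "\<dots> \<le> Wr r" using False by (intro W_mono) auto
      finally show ?thesis using False by (simp add: m_def)
    qed
    have L: "epowr (Wprim w r) q = ennreal (Wr r powr q)"
      unfolding W_eq by (rule epowr_ennreal[OF Wr_nonneg])
    have "Wr r powr q \<le> (D * m) powr q" using up q by (intro powr_mono2) (auto simp: Wr_nonneg)
    then have 1: "epowr (Wprim w r) q \<le> ennreal (D powr q) * ennreal (m powr q)"
      unfolding L using D m by (simp add: ennreal_mult[symmetric] powr_mult del: ennreal_mult)
    have "(w a * m) powr q \<le> Wr r powr q" using lo q a m by (intro powr_mono2) auto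
    then have 2: "ennreal (w a powr q) * ennreal (m powr q) \<le> epowr (Wprim w r) q"
      unfolding L using a m by (simp add: ennreal_mult[symmetric] powr_mult del: ennreal_mult)
    have 3: "Rfun q a r \<le> ennreal (a powr (1-q)) * ennreal (m powr q)"
    proof (cases "r \<le> a")
      case True
      then show ?thesis using Rfun_small(1)[OF a(1) q r True] by (simp add: m_def ennreal_mult[symmetric] del: ennreal_mult)
    next
      case False
      have "a = a powr (1-q) * a powr q" using a by (simp add: powr_add[symmetric])
      then have "ennreal a = ennreal (a powr (1-q)) * ennreal (m powr q)"
        using False by (simp add: m_def ennreal_mult[symmetric] del: ennreal_mult)
      then show ?thesis using Rfun_large(1)[OF a(1) q] False by simp
    qed
    have 4: "ennreal (2 powr (-q) * a powr (1-q)) * ennreal (m powr q) \<le> Rfun q a r"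
    proof (cases "r \<le> a")
      case True
      then show ?thesis using Rfun_small(2)[OF a(1) q r True] by (simp add: m_def ennreal_mult[symmetric] del: ennreal_mult)
    next
      case False
      have e: "2 powr (-q) * a powr (1-q) * a powr q = 2 powr (-q) * a" using a by (simp add: mult.assoc powr_add[symmetric])
      have "ennreal (2 powr (-q) * a powr (1-q)) * ennreal (m powr q) = ennreal (2 powr (-q) * a)"
        using False by (simp add: m_def ennreal_mult[symmetric] e del: ennreal_mult)
      then have "ennreal (2 powr (-q) * a) = ennreal (2 powr (-q) * a powr (1-q)) * ennreal (m powr q)" by simp
      then show ?thesis using Rfun_large(2)[OF a(1) q] False by simp
    qed
    show "epowr (Wprim w r) q \<le> ennreal (D powr q) * ennreal (min r a powr q) \<and>
          ennreal (w a powr q) * ennreal (min r a powr q) \<le> epowr (Wprim w r) q \<and>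
          Rfun q a r \<le> ennreal (a powr (1 - q)) * ennreal (min r a powr q) \<and>
          ennreal (2 powr - q * a powr (1 - q)) * ennreal (min r a powr q) \<le> Rfun q a r"
      using 1 2 3 4 unfolding m_def by blast
  qed
  then show ?thesis unfolding equiv_on_pos_def Rfun_def by blast
qed

end


lemma term_eq:
  fixes t a s :: real
  assumes "0 < t" "0 < a" "0 < s"
  shows "(1/a) * (min t s / t) = min (1/a) (s/a/t)"
  using assms by (cases "t \<le> s") (auto simp: min_def field_simps)

context dw
begin

definition sepr :: "(nat \<Rightarrow> real) \<Rightarrow> bool" where
  "sepr s \<longleftrightarrow> (\<forall>k. 0 < s k \<and> 0 < Wr (s k)) \<and>
     ((\<forall>k. 2 * Wr (s k) \<le> Wr (s (Suc k)) \<and> 2 * (s k / Wr (s k)) \<le> s (Suc k) / Wr (s (Suc k))) \<or>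
      (\<forall>k. 2 * Wr (s (Suc k)) \<le> Wr (s k) \<and> 2 * (s (Suc k) / Wr (s (Suc k))) \<le> s k / Wr (s k)))"

lemma sep_bound:
  assumes sp: "sepr s" and t: "0 < t" and K: "0 < K"
  shows "\<exists>j<K. (\<Sum>k<K. (1 / Wr (s k)) * (min t (s k) / t)) \<le> 4 * ((1 / Wr (s j)) * (min t (s j) / t))"
proof -
  define u where "u k = 1 / Wr (s k)" for k
  define v where "v k = s k / Wr (s k) / t" for k
  have pos: "0 < s k" "0 < Wr (s k)" for k using sp unfolding sepr_def by auto
  have u0: "0 \<le> u k" for k using pos[of k] unfolding u_def by simp
  have v0: "0 \<le> v k" for k using pos[of k] t unfolding v_def by simp
  have eq: "(1 / Wr (s k)) * (min t (s k) / t) = min (u k) (v k)" for k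
    unfolding u_def v_def using pos t by (intro term_eq) auto
  have "\<exists>j<K. (\<Sum>k<K. min (u k) (v k)) \<le> 4 * min (u j) (v j)"
    using sp unfolding sepr_def
  proof (elim conjE disjE)
    assume up: "\<forall>k. 2 * Wr (s k) \<le> Wr (s (Suc k)) \<and> 2 * (s k / Wr (s k)) \<le> s (Suc k) / Wr (s (Suc k))"
    have uh: "2 * u (Suc k) \<le> u k" for k
      using up pos unfolding u_def by (auto simp: field_simps)
    have vd: "2 * v k \<le> v (Suc k)" for k
    proof -
      have "2 * (s (k) / Wr (s (k))) \<le> s (Suc k) / Wr (s (Suc k))" using up by blast
      then have "2 * (s (k) / Wr (s (k))) / t \<le> s (Suc k) / Wr (s (Suc k)) / t" using t by (intro divide_right_mono) auto
      then show ?thesis unfolding v_def by simp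
    qed
    show ?thesis by (rule geo_main[of u v, OF u0 v0 uh vd K])
  next
    assume dn: "\<forall>k. 2 * Wr (s (Suc k)) \<le> Wr (s k) \<and> 2 * (s (Suc k) / Wr (s (Suc k))) \<le> s k / Wr (s k)"
    have ud: "2 * u k \<le> u (Suc k)" for k
      using dn pos unfolding u_def by (auto simp: field_simps)
    have vh: "2 * v (Suc k) \<le> v k" for k
    proof -
      have "2 * (s (Suc k) / Wr (s (Suc k))) \<le> s (k) / Wr (s (k))" using dn by blast
      then have "2 * (s (Suc k) / Wr (s (Suc k))) / t \<le> s (k) / Wr (s (k)) / t" using t by (intro divide_right_mono) auto
      then show ?thesis unfolding v_def by simp
    qed
    obtain j where "j < K" "(\<Sum>k<K. min (v k) (u k)) \<le> 4 * min (v j) (u j)"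
      using geo_main[of v u, OF v0 u0 vh ud K] by blast
    then show ?thesis by (auto simp: min.commute)
  qed
  then show ?thesis unfolding eq by simp
qed

lemma Lambda_testf:
  assumes c: "\<And>k. 0 \<le> c k" and sp: "\<And>k. 0 < s k"
  shows "Lambda1_norm w (testf c s K :: 'a::euclidean_space \<Rightarrow> real) = ennreal (\<Sum>k<K. c k * Wr (s k))"
proof -
  have "Lambda1_norm w (testf c s K :: 'a \<Rightarrow> real)
      = (\<integral>\<^sup>+ t. (\<Sum>k<K. ennreal (c k) * (ennreal (w0 t) * indicator {0<..<s k} t)) \<partial>lborel)"
    unfolding Lambda_eq
  proof (intro nn_integral_cong)
    fix t :: real
    show "rearr (testf c s K :: 'a \<Rightarrow> real) t * ennreal (w0 t) = (\<Sum>k<K. ennreal (c k) * (ennreal (w0 t) * indicator {0<..<s k} t))"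
    proof (cases "0 < t")
      case True
      have "rearr (testf c s K :: 'a \<Rightarrow> real) t * ennreal (w0 t) = ennreal (stepf c s K t) * ennreal (w0 t)"
        using rearr_testf[where 'a='a, of c t s K, OF c True] by simp
      also have "ennreal (stepf c s K t) = (\<Sum>k<K. ennreal (c k * (if t < s k then 1 else 0)))"
        unfolding stepf_def using c by (subst sum_ennreal) auto
      finally show ?thesis using True
        by (auto simp: sum_distrib_right indicator_def ennreal_mult intro!: sum.cong)
    next
      case False then show ?thesis by (simp add: w0_def)
    qed
  qed
  also have "\<dots> = (\<Sum>k<K. ennreal (c k) * Wprim w (s k))"
    unfolding Wprim_eq by (subst nn_integral_sum) (auto simp: nn_integral_cmult mult.commute)
  also have "\<dots> = ennreal (\<Sum>k<K. c k * Wr (s k))"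
    unfolding W_eq using c Wr_nonneg by (subst sum_ennreal[symmetric]) (auto simp: ennreal_mult)
  finally show ?thesis .
qed


lemma mj_W_le1:
  assumes sj: "0 < sj" "0 < Wr sj" and t: "0 < t"
  shows "(1 / Wr sj) * (min t sj / t) * Wr t \<le> 1"
proof (cases "t \<le> sj")
  case True
  have "Wr t \<le> Wr sj" using True by (rule W_mono)
  then show ?thesis using True t sj by (simp add: min_def field_simps)
next
  case False
  have "sj * Wr t \<le> t * Wr sj" using W_ratio[OF sj(1)] False by simp
  then show ?thesis using False t sj by (simp add: min_def field_simps)
qed

lemma sum_c_eq:
  "(\<Sum>k<K. (1 / Wr (s k)) * min t (s k)) / t = (\<Sum>k<K. (1 / Wr (s k)) * (min t (s k) / t))"
  by (simp add: sum_divide_distrib)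

lemma no_G1:
  assumes sp: "sepr s"
  shows "\<not> space_eq (Lambda1_norm w :: ('a::euclidean_space \<Rightarrow> real) \<Rightarrow> ennreal) (Gamma1inf_norm w)"
proof
  assume "space_eq (Lambda1_norm w :: ('a \<Rightarrow> real) \<Rightarrow> ennreal) (Gamma1inf_norm w)"
  then obtain C :: real where C: "C > 0" and CC: "\<And>f::'a \<Rightarrow> real. f \<in> borel_measurable lebesgue \<Longrightarrow>
      Lambda1_norm w f \<le> ennreal C * Gamma1inf_norm w f"
    unfolding space_eq_def by blast
  have pos: "0 < s k" "0 < Wr (s k)" for k using sp unfolding sepr_def by auto
  define K where "K = nat \<lceil>4 * C\<rceil> + 1"
  have K: "0 < K" unfolding K_def by simp
  have K4: "4 * C < real K" unfolding K_def using C by linarith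
  define c where "c k = 1 / Wr (s k)" for k
  have c0: "0 \<le> c k" for k unfolding c_def using pos[of k] by simp
  define f where "f = (testf c s K :: 'a \<Rightarrow> real)"
  have fm: "f \<in> borel_measurable lebesgue" unfolding f_def by (rule testf_meas[OF c0])
  have "Lambda1_norm w f = ennreal (\<Sum>k<K. c k * Wr (s k))"
    unfolding f_def by (rule Lambda_testf[OF c0 pos(1)])
  also have "(\<Sum>k<K. c k * Wr (s k)) = (\<Sum>k<K. 1)"
    unfolding c_def using pos by (intro sum.cong) (auto simp: less_imp_neq[symmetric])
  also have "(\<Sum>k<K. 1::real) = real K" by simp
  finally have L: "Lambda1_norm w f = ennreal (real K)" .
  have G: "Gamma1inf_norm w f \<le> 4"
    unfolding Gamma1inf_norm_def
  proof (rule SUP_least)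
    fix t :: real assume "t \<in> {0<..}"
    then have t: "0 < t" by simp
    obtain j where j: "j < K" "(\<Sum>k<K. (1 / Wr (s k)) * (min t (s k) / t)) \<le> 4 * ((1 / Wr (s j)) * (min t (s j) / t))"
      using sep_bound[OF sp t K] by blast
    have mr: "max_rearr f t = ennreal (\<Sum>k<K. (1 / Wr (s k)) * (min t (s k) / t))"
    proof -
      have "max_rearr f t = ennreal ((\<Sum>k<K. c k * min t (s k)) / t)"
        unfolding f_def by (rule max_rearr_testf[where 'a='a, of c s t K, OF c0 pos(1) t])
      also have "(\<Sum>k<K. c k * min t (s k)) / t = (\<Sum>k<K. (1 / Wr (s k)) * (min t (s k) / t))"
        unfolding c_def by (rule sum_c_eq)
      finally show ?thesis .
    qed
    have "(\<Sum>k<K. (1 / Wr (s k)) * (min t (s k) / t)) * Wr t \<le> 4 * ((1 / Wr (s j)) * (min t (s j) / t)) * Wr t"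
      using j Wr_nonneg by (intro mult_right_mono) auto
    also have "\<dots> \<le> 4" using mj_W_le1[OF pos(1)[of j] pos(2)[of j] t] by simp
    finally have "(\<Sum>k<K. (1 / Wr (s k)) * (min t (s k) / t)) * Wr t \<le> 4" .
    then have "ennreal ((\<Sum>k<K. (1 / Wr (s k)) * (min t (s k) / t)) * Wr t) \<le> 4"
      by (metis ennreal_leI ennreal_numeral)
    then show "max_rearr f t * Wprim w t \<le> 4"
    proof -
      note that = \<open>ennreal ((\<Sum>k<K. (1 / Wr (s k)) * (min t (s k) / t)) * Wr t) \<le> 4\<close>
      have "0 \<le> (\<Sum>k<K. (1 / Wr (s k)) * (min t (s k) / t))"
      proof (intro sum_nonneg)
        fix k show "0 \<le> (1 / Wr (s k)) * (min t (s k) / t)" using pos[of k] t by simp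
      qed
      then show ?thesis using that unfolding mr W_eq using Wr_nonneg
        by (subst (asm) ennreal_mult) auto
    qed
  qed
  have "ennreal (real K) \<le> ennreal C * 4"
    using CC[OF fm] G unfolding L by (meson mult_left_mono order_trans zero_le)
  also have "\<dots> = ennreal (4 * C)" using C by (simp add: ennreal_mult mult.commute)
  finally have "real K \<le> 4 * C" using C by (subst (asm) ennreal_le_iff) auto
  then show False using K4 by simp
qed


lemma big_K:
  fixes q C :: real
  assumes q: "1 < q" and C: "0 < C"
  shows "\<exists>K::nat. 0 < K \<and> 4 * C * C * real K powr (1/q) < real K"
proof -
  define X where "X = 4 * C * C + 1"
  have X: "1 < X" unfolding X_def using C by simp
  define K where "K = nat \<lceil>X powr (q / (q - 1))\<rceil> + 1"
  have K0: "0 < K" unfolding K_def by simp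
  have KY: "X powr (q / (q - 1)) \<le> real K" unfolding K_def by linarith
  have "X = (X powr (q / (q - 1))) powr ((q - 1) / q)"
    using q X by (simp add: powr_powr)
  also have "\<dots> \<le> real K powr ((q - 1) / q)" using KY q X by (intro powr_mono2) auto
  finally have XK: "X \<le> real K powr ((q - 1) / q)" .
  have "real K = real K powr (1/q) * real K powr ((q - 1) / q)"
  proof -
    have "1/q + (q - 1)/q = 1" using q by (simp add: field_simps)
    then have "real K powr (1/q) * real K powr ((q - 1) / q) = real K powr 1"
      by (simp add: powr_add[symmetric])
    then show ?thesis using K0 by simp
  qed
  also have "\<dots> \<ge> real K powr (1/q) * X" using XK by (intro mult_left_mono) auto
  finally have "real K powr (1/q) * X \<le> real K" .
  moreover have "0 < real K powr (1/q)" using K0 by simp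
  moreover have "real K powr (1/q) * X = 4 * C * C * real K powr (1/q) + real K powr (1/q)"
    unfolding X_def by (simp add: algebra_simps)
  ultimately have "4 * C * C * real K powr (1/q) < real K" by linarith
  then show ?thesis using K0 by blast
qed

lemma pw_bound:
  assumes sp: "sepr s" and t: "0 < t" and K: "0 < K" and q: "0 < q"
  shows "(\<Sum>k<K. (1 / Wr (s k)) * (min t (s k) / t)) powr q
      \<le> (\<Sum>k<K. 4 powr q * (1 / Wr (s k)) powr q * (min t (s k) / t) powr q)"
proof -
  have pos: "0 < s k" "0 < Wr (s k)" for k using sp unfolding sepr_def by auto
  define m where "m k = (1 / Wr (s k)) * (min t (s k) / t)" for k
  have m0: "0 \<le> m k" for k unfolding m_def using pos[of k] t by simp
  obtain j where j: "j < K" "(\<Sum>k<K. m k) \<le> 4 * m j"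
    using sep_bound[OF sp t K] unfolding m_def by blast
  have "(\<Sum>k<K. m k) powr q \<le> (4 * m j) powr q"
    using j q m0 by (intro powr_mono2) (auto intro: sum_nonneg)
  also have "\<dots> = 4 powr q * m j powr q" using m0 by (simp add: powr_mult)
  also have "\<dots> \<le> 4 powr q * (\<Sum>k<K. m k powr q)"
    using j by (intro mult_left_mono member_le_sum) auto
  also have "\<dots> = (\<Sum>k<K. 4 powr q * (1 / Wr (s k)) powr q * (min t (s k) / t) powr q)"
    unfolding sum_distrib_left m_def using pos t
  proof (intro sum.cong refl)
    fix k
    have "((1 / Wr (s k)) * (min t (s k) / t)) powr q = (1 / Wr (s k)) powr q * (min t (s k) / t) powr q"
      using pos[of k] t by (subst powr_mult) auto
    then show "4 powr q * ((1 / Wr (s k)) * (min t (s k) / t)) powr q = 4 powr q * (1 / Wr (s k)) powr q * (min t (s k) / t) powr q"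
      by simp
  qed
  finally show ?thesis unfolding m_def .
qed


lemma no_Gq:
  assumes sp: "sepr s" and q: "1 < q" and vw: "is_weight v"
  shows "\<not> space_eq (Lambda1_norm w :: ('a::euclidean_space \<Rightarrow> real) \<Rightarrow> ennreal) (Gamma_norm q v)"
proof
  assume "space_eq (Lambda1_norm w :: ('a \<Rightarrow> real) \<Rightarrow> ennreal) (Gamma_norm q v)"
  then obtain C :: real where C: "C > 0" and CC: "\<And>f::'a \<Rightarrow> real. f \<in> borel_measurable lebesgue \<Longrightarrow>
      Lambda1_norm w f \<le> ennreal C * Gamma_norm q v f \<and> Gamma_norm q v f \<le> ennreal C * Lambda1_norm w f"
    unfolding space_eq_def by blast
  have q0: "0 < q" using q by simp
  have pos: "0 < s k" "0 < Wr (s k)" for k using sp unfolding sepr_def by auto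
  define v0 where "v0 x = indicator {0<..} x * v x" for x
  have v0m[measurable]: "v0 \<in> borel_measurable borel"
  proof -
    have "(\<lambda>x. indicator {0<..} x *\<^sub>R v x) \<in> borel_measurable lborel"
      using vw unfolding is_weight_def set_borel_measurable_def by auto
    then show ?thesis unfolding v0_def[abs_def] by simp
  qed
  have v0nn: "0 \<le> v0 x" for x using vw unfolding v0_def is_weight_def by (auto simp: indicator_def)
  have GI: "Gamma_norm q v f = epowr (\<integral>\<^sup>+ t. epowr (max_rearr f t) q * ennreal (v0 t) \<partial>lborel) (1/q)"
    for f :: "'a \<Rightarrow> real"
  proof -
    have "(\<integral>\<^sup>+ t\<in>{0<..}. epowr (max_rearr f t) q * ennreal (v t) \<partial>lborel)
        = (\<integral>\<^sup>+ t. epowr (max_rearr f t) q * ennreal (v0 t) \<partial>lborel)"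
      by (intro nn_integral_cong) (auto simp: v0_def indicator_def)
    then show ?thesis unfolding Gamma_norm_def by simp
  qed
  define Phi where "Phi k = (\<integral>\<^sup>+ t. ennreal ((min t (s k) / t) powr q) * ennreal (v0 t) \<partial>lborel)" for k
  have Phi: "Phi k \<le> ennreal ((C * Wr (s k)) powr q)" for k
  proof -
    define h where "h = (testf (\<lambda>_. 1) (\<lambda>_. s k) 1 :: 'a \<Rightarrow> real)"
    have hm: "h \<in> borel_measurable lebesgue" unfolding h_def by (rule testf_meas) simp
    have Lh: "Lambda1_norm w h = ennreal (Wr (s k))"
      unfolding h_def using Lambda_testf[where 'a='a, of "\<lambda>_. 1" "\<lambda>_. s k" 1] pos by simp
    have Mh: "max_rearr h t = ennreal (min t (s k) / t)" if t: "0 < t" for t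
      unfolding h_def using max_rearr_testf[where 'a='a, of "\<lambda>_. 1" "\<lambda>_. s k" t 1] pos t by simp
    have "(\<integral>\<^sup>+ t. epowr (max_rearr h t) q * ennreal (v0 t) \<partial>lborel) = Phi k"
      unfolding Phi_def
    proof (intro nn_integral_cong)
      fix t :: real
      show "epowr (max_rearr h t) q * ennreal (v0 t) = ennreal ((min t (s k) / t) powr q) * ennreal (v0 t)"
      proof (cases "0 < t")
        case True
        then show ?thesis unfolding Mh[OF True] using pos[of k] by (subst epowr_ennreal) auto
      next
        case False then show ?thesis by (simp add: v0_def)
      qed
    qed
    moreover have "epowr (\<integral>\<^sup>+ t. epowr (max_rearr h t) q * ennreal (v0 t) \<partial>lborel) (1/q) \<le> ennreal (C * Wr (s k))"
      using CC[OF hm] unfolding GI Lh using C Wr_nonneg by (simp add: ennreal_mult)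
    ultimately have "epowr (Phi k) (1/q) \<le> ennreal (C * Wr (s k))" by simp
    then show ?thesis using q0 C Wr_nonneg by (intro epowr_inv_le) auto
  qed
  obtain K :: nat where K: "0 < K" "4 * C * C * real K powr (1/q) < real K"
    using big_K[OF q C] by blast
  define c where "c k = 1 / Wr (s k)" for k
  have c0: "0 \<le> c k" for k unfolding c_def using pos[of k] by simp
  define f where "f = (testf c s K :: 'a \<Rightarrow> real)"
  have fm: "f \<in> borel_measurable lebesgue" unfolding f_def by (rule testf_meas[OF c0])
  have "Lambda1_norm w f = ennreal (\<Sum>k<K. c k * Wr (s k))"
    unfolding f_def by (rule Lambda_testf[OF c0 pos(1)])
  also have "(\<Sum>k<K. c k * Wr (s k)) = (\<Sum>k<K. 1)"
    unfolding c_def using pos by (intro sum.cong) (auto simp: less_imp_neq[symmetric])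
  also have "(\<Sum>k<K. 1::real) = real K" by simp
  finally have L: "Lambda1_norm w f = ennreal (real K)" .
  have "(\<integral>\<^sup>+ t. epowr (max_rearr f t) q * ennreal (v0 t) \<partial>lborel)
      \<le> (\<integral>\<^sup>+ t. (\<Sum>k<K. ennreal (4 powr q * (1 / Wr (s k)) powr q) *
              (ennreal ((min t (s k) / t) powr q) * ennreal (v0 t))) \<partial>lborel)"
  proof (intro nn_integral_mono)
    fix t :: real
    show "epowr (max_rearr f t) q * ennreal (v0 t) \<le> (\<Sum>k<K. ennreal (4 powr q * (1 / Wr (s k)) powr q) *
              (ennreal ((min t (s k) / t) powr q) * ennreal (v0 t)))"
    proof (cases "0 < t")
      case False then show ?thesis by (simp add: v0_def)
    next
      case t: True
      define G where "G = (\<Sum>k<K. (1 / Wr (s k)) * (min t (s k) / t))"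
      have G0: "0 \<le> G" unfolding G_def
      proof (intro sum_nonneg)
        fix k show "0 \<le> (1 / Wr (s k)) * (min t (s k) / t)" using pos[of k] t by simp
      qed
      have mr: "max_rearr f t = ennreal G"
      proof -
        have "max_rearr f t = ennreal ((\<Sum>k<K. c k * min t (s k)) / t)"
          unfolding f_def by (rule max_rearr_testf[where 'a='a, of c s t K, OF c0 pos(1) t])
        also have "(\<Sum>k<K. c k * min t (s k)) / t = G"
          unfolding c_def G_def by (rule sum_c_eq)
        finally show ?thesis .
      qed
      have tn: "0 \<le> 4 powr q * (1 / Wr (s k)) powr q * (min t (s k) / t) powr q" for k by simp
      have "epowr (max_rearr f t) q = ennreal (G powr q)" unfolding mr using G0 by (rule epowr_ennreal)
      also have "\<dots> \<le> ennreal (\<Sum>k<K. 4 powr q * (1 / Wr (s k)) powr q * (min t (s k) / t) powr q)"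
        using pw_bound[OF sp t K(1) q0] unfolding G_def by (intro ennreal_leI)
      also have "\<dots> = (\<Sum>k<K. ennreal (4 powr q * (1 / Wr (s k)) powr q) * ennreal ((min t (s k) / t) powr q))"
        using tn by (subst sum_ennreal[symmetric]) (auto simp: ennreal_mult)
      finally have "epowr (max_rearr f t) q * ennreal (v0 t)
          \<le> (\<Sum>k<K. ennreal (4 powr q * (1 / Wr (s k)) powr q) * ennreal ((min t (s k) / t) powr q)) * ennreal (v0 t)"
        by (rule mult_right_mono) simp
      then show ?thesis by (simp add: sum_distrib_right mult.assoc)
    qed
  qed
  also have "\<dots> = (\<Sum>k<K. ennreal (4 powr q * (1 / Wr (s k)) powr q) * Phi k)"
    unfolding Phi_def by (subst nn_integral_sum) (auto simp: nn_integral_cmult)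
  also have "\<dots> \<le> (\<Sum>k<K. ennreal (4 powr q * (1 / Wr (s k)) powr q) * ennreal ((C * Wr (s k)) powr q))"
    by (intro sum_mono mult_left_mono Phi) auto
  also have "\<dots> = (\<Sum>k<K. ennreal (4 powr q * C powr q))"
  proof (intro sum.cong refl)
    fix k
    have "(1 / Wr (s k)) powr q * (C * Wr (s k)) powr q = ((1 / Wr (s k)) * (C * Wr (s k))) powr q"
      using pos[of k] C by (subst powr_mult) auto
    also have "(1 / Wr (s k)) * (C * Wr (s k)) = C" using pos[of k] by simp
    finally show "ennreal (4 powr q * (1 / Wr (s k)) powr q) * ennreal ((C * Wr (s k)) powr q) = ennreal (4 powr q * C powr q)"
      by (simp add: ennreal_mult[symmetric] mult.assoc del: ennreal_mult)
  qed
  also have "\<dots> = ennreal (real K * (4 powr q * C powr q))"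
    by (simp add: ennreal_mult ennreal_of_nat_eq_real_of_nat)
  finally have "epowr (\<integral>\<^sup>+ t. epowr (max_rearr f t) q * ennreal (v0 t) \<partial>lborel) (1/q)
      \<le> epowr (ennreal (real K * (4 powr q * C powr q))) (1/q)"
    using q0 by (intro epowr_mono) auto
  also have "\<dots> = ennreal ((real K * (4 powr q * C powr q)) powr (1/q))" by (rule epowr_ennreal) simp
  also have "(real K * (4 powr q * C powr q)) powr (1/q) = real K powr (1/q) * 4 * C"
    using C q0 by (simp add: powr_mult powr_powr)
  finally have G: "Gamma_norm q v f \<le> ennreal (real K powr (1/q) * 4 * C)" unfolding GI .
  have "ennreal (real K) \<le> ennreal C * ennreal (real K powr (1/q) * 4 * C)"
    using CC[OF fm] G unfolding L by (meson mult_left_mono order_trans zero_le)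
  also have "\<dots> = ennreal (4 * C * C * real K powr (1/q))" using C by (simp add: ennreal_mult[symmetric] algebra_simps)
  finally have "real K \<le> 4 * C * C * real K powr (1/q)" using C by (subst (asm) ennreal_le_iff) auto
  then show False using K by simp
qed


lemma Wr_nonpos: "t \<le> 0 \<Longrightarrow> Wr t = 0"
proof -
  assume "t \<le> 0"
  then have "{0<..<t} = {}" by auto
  then show "Wr t = 0" unfolding Wr_def Wprim_def by simp
qed

lemma W_to0:
  assumes e: "0 < e" shows "\<exists>d>0. \<forall>y. 0 < y \<longrightarrow> y < d \<longrightarrow> Wr y < e"
proof -
  define f where "f n x = ennreal (w0 x) * indicator {0<..<1 / real (Suc n)} x" for n x
  have dec: "decseq f"
  proof (rule decseq_SucI, rule le_funI)
    fix n x
    have "1 / real (Suc (Suc n)) \<le> 1 / real (Suc n)" by (simp add: frac_le)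
    then have "indicator {0<..<1 / real (Suc (Suc n))} x \<le> (indicator {0<..<1 / real (Suc n)} x :: ennreal)"
      by (auto simp: indicator_def)
    then show "f (Suc n) x \<le> f n x" unfolding f_def by (rule mult_left_mono) simp
  qed
  have fin: "(\<integral>\<^sup>+ x. f 0 x \<partial>lborel) < \<infinity>"
    unfolding f_def using Wprim_fin[of 1] unfolding Wprim_eq by simp
  have inf0: "(INF n. f n x) = 0" for x
  proof (cases "0 < x")
    case True
    obtain n where n: "n > 0" "inverse (real n) < x" using ex_inverse_of_nat_less[OF True] by blast
    have "1 / real (Suc n) \<le> inverse (real n)" using n by (simp add: inverse_eq_divide frac_le)
    then have "f n x = 0" unfolding f_def using n by (auto simp: indicator_def)
    then show ?thesis by (metis INF_lower2 UNIV_I le_zero_eq order_refl)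
  next
    case False then show ?thesis unfolding f_def w0_def by simp
  qed
  have "(INF n. (\<integral>\<^sup>+ x. f n x \<partial>lborel)) = (\<integral>\<^sup>+ x. (INF n. f n x) \<partial>lborel)"
    by (rule nn_integral_monotone_convergence_INF_decseq[OF dec _ fin, symmetric]) (simp add: f_def)
  also have "\<dots> = 0" unfolding inf0 by simp
  finally have "(INF n. (\<integral>\<^sup>+ x. f n x \<partial>lborel)) < ennreal e" using e by simp
  then obtain n where n: "(\<integral>\<^sup>+ x. f n x \<partial>lborel) < ennreal e" by (auto simp: INF_less_iff)
  then have "Wprim w (1 / real (Suc n)) < ennreal e" unfolding Wprim_eq f_def .
  then have Wn: "Wr (1 / real (Suc n)) < e" unfolding W_eq using e Wr_nonneg by (simp add: ennreal_less_iff)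
  show ?thesis
  proof (intro exI[of _ "1 / real (Suc n)"] conjI allI impI)
    fix y assume "0 < y" "y < 1 / real (Suc n)"
    then have "Wr y \<le> Wr (1 / real (Suc n))" by (intro W_mono) simp
    then show "Wr y < e" using Wn by simp
  qed simp
qed

lemma step_down:
  assumes unb: "\<not> (\<exists>B. \<forall>x>0. w x \<le> B)" and x: "0 < x" "0 < w x"
  shows "\<exists>y. 0 < y \<and> 0 < w y \<and> y < x \<and> 2 * Wr y \<le> Wr x \<and> 2 * (y / Wr y) \<le> x / Wr x"
proof -
  have Wx: "0 < Wr x" using W_lower[OF x(1)] x by (smt (verit) mult_pos_pos)
  obtain d where d: "d > 0" "\<And>y. 0 < y \<Longrightarrow> y < d \<Longrightarrow> Wr y < Wr x / 2"
    using W_to0[of "Wr x / 2"] Wx by auto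
  obtain y1 where y1: "y1 > 0" "w y1 > 2 * Wr x / x" using unb by (meson not_le)
  define y where "y = min y1 (min (d/2) (x/2))"
  have y: "0 < y" "y < x" "y < d" "y \<le> y1" using y1 d x unfolding y_def by auto
  have wy: "w y1 \<le> w y" using w_anti[OF y(1) y(4)] .
  then have wy2: "2 * Wr x / x < w y" using y1 by simp
  have "0 < 2 * Wr x / x" using Wx x by simp
  then have wyp: "0 < w y" using wy2 by simp
  have "y * w y \<le> Wr y" by (rule W_lower[OF y(1)])
  then have "w y \<le> Wr y / y" using y by (simp add: field_simps)
  then have r: "2 * Wr x / x < Wr y / y" using wy2 by simp
  have Wy: "0 < Wr y" using W_lower[OF y(1)] y wyp by (smt (verit) mult_pos_pos)
  have "2 * (y / Wr y) \<le> x / Wr x"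
  proof -
    have "2 * Wr x * y < Wr y * x" using r x y Wy by (simp add: field_simps)
    then show ?thesis using x y Wy Wx by (simp add: field_simps)
  qed
  moreover have "2 * Wr y \<le> Wr x" using d(2)[OF y(1) y(3)] by simp
  ultimately show ?thesis using y wyp by blast
qed

lemma seq_down:
  assumes unb: "\<not> (\<exists>B. \<forall>x>0. w x \<le> B)"
  shows "\<exists>s. sepr s"
proof -
  obtain x0 where x0: "0 < x0" "0 < w x0" using unb by (meson not_le)
  have "\<exists>f. \<forall>n. (0 < f n \<and> 0 < w (f n)) \<and>
      (2 * Wr (f (Suc n)) \<le> Wr (f n) \<and> 2 * (f (Suc n) / Wr (f (Suc n))) \<le> f n / Wr (f n))"
  proof (rule dependent_nat_choice)
    show "\<exists>x. 0 < x \<and> 0 < w x" using x0 by blast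
    fix x n assume "0 < x \<and> 0 < w x"
    then obtain y where "0 < y \<and> 0 < w y \<and> y < x \<and> 2 * Wr y \<le> Wr x \<and> 2 * (y / Wr y) \<le> x / Wr x"
      using step_down[OF unb] by blast
    then show "\<exists>y. (0 < y \<and> 0 < w y) \<and> 2 * Wr y \<le> Wr x \<and> 2 * (y / Wr y) \<le> x / Wr x" by blast
  qed
  then obtain f where f: "\<And>n. 0 < f n" "\<And>n. 0 < w (f n)"
    "\<And>n. 2 * Wr (f (Suc n)) \<le> Wr (f n) \<and> 2 * (f (Suc n) / Wr (f (Suc n))) \<le> f n / Wr (f n)" by blast
  have "0 < Wr (f n)" for n using W_lower[OF f(1)[of n]] f(1,2)[of n] by (smt (verit) mult_pos_pos)
  then have "sepr f" unfolding sepr_def using f by blast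
  then show ?thesis by blast
qed

lemma ratio_to0:
  assumes to0: "\<And>e. 0 < e \<Longrightarrow> \<exists>T>0. w T < e" and e: "0 < e"
  shows "\<exists>Y>0. \<forall>y\<ge>Y. Wr y / y \<le> e"
proof -
  obtain T where T: "T > 0" "w T < e / 2" using to0[of "e/2"] e by auto
  define Y where "Y = max T (2 * Wr T / e + 1)"
  have Y: "0 < Y" "T \<le> Y" "2 * Wr T / e < Y" unfolding Y_def using T by auto
  show ?thesis
  proof (intro exI[of _ Y] conjI allI impI Y(1))
    fix y assume yY: "Y \<le> y"
    then have y: "0 < y" "T \<le> y" using Y by auto
    have "Wr y \<le> Wr T + (y - T) * w T" by (rule W_split[OF T(1) y(2)])
    also have "\<dots> \<le> Wr T + y * (e / 2)" using T y w_nonneg[OF T(1)]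
      by (intro add_left_mono) (smt (verit) mult_left_mono mult_right_mono)
    also have "Wr T \<le> y * (e / 2)"
    proof -
      have "2 * Wr T < Y * e" using Y(3) e by (simp add: field_simps)
      moreover have "Y * e \<le> y * e" using yY e by (intro mult_right_mono) auto
      ultimately show ?thesis by simp
    qed
    finally have "Wr y \<le> y * e" by (simp add: mult.commute)
    then show "Wr y / y \<le> e" using y by (simp add: field_simps)
  qed
qed

lemma step_up:
  assumes unb: "\<not> (\<exists>A. \<forall>t. Wr t \<le> A)" and to0: "\<And>e. 0 < e \<Longrightarrow> \<exists>T>0. w T < e"
    and x: "0 < x" "0 < Wr x"
  shows "\<exists>y. 0 < y \<and> 0 < Wr y \<and> 2 * Wr x \<le> Wr y \<and> 2 * (x / Wr x) \<le> y / Wr y"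
proof -
  obtain Y where Y: "Y > 0" "\<And>y. Y \<le> y \<Longrightarrow> Wr y / y \<le> Wr x / (2 * x)"
    using ratio_to0[OF to0, of "Wr x / (2 * x)"] x by auto
  obtain y1 where y1: "Wr y1 > 2 * Wr x" using unb by (meson not_le)
  define y where "y = max y1 (max Y (x + 1))"
  have y: "0 < y" "y1 \<le> y" "Y \<le> y" using Y x unfolding y_def by auto
  have Wy: "2 * Wr x < Wr y" using W_mono[OF y(2)] y1 by simp
  then have Wyp: "0 < Wr y" using x by simp
  have "Wr y / y \<le> Wr x / (2 * x)" using Y(2)[OF y(3)] .
  then have "2 * (x / Wr x) \<le> y / Wr y" using x y Wyp by (simp add: field_simps)
  then show ?thesis using y Wyp Wy by auto
qed

lemma seq_up:
  assumes unb: "\<not> (\<exists>A. \<forall>t. Wr t \<le> A)" and to0: "\<And>e. 0 < e \<Longrightarrow> \<exists>T>0. w T < e"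
  shows "\<exists>s. sepr s"
proof -
  obtain x0 where x0: "0 < Wr x0" using unb by (meson not_le Wr_nonneg order.strict_trans1)
  have "0 < x0" using x0 Wr_nonpos by (metis less_irrefl not_less)
  have "\<exists>f. \<forall>n. (0 < f n \<and> 0 < Wr (f n)) \<and>
      (2 * Wr (f n) \<le> Wr (f (Suc n)) \<and> 2 * (f n / Wr (f n)) \<le> f (Suc n) / Wr (f (Suc n)))"
  proof (rule dependent_nat_choice)
    show "\<exists>x. 0 < x \<and> 0 < Wr x" using x0 \<open>0 < x0\<close> by blast
    fix x n assume "0 < x \<and> 0 < Wr x"
    then show "\<exists>y. (0 < y \<and> 0 < Wr y) \<and> 2 * Wr x \<le> Wr y \<and> 2 * (x / Wr x) \<le> y / Wr y"
      using step_up[OF unb to0] by blast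
  qed
  then obtain f where "\<forall>n. (0 < f n \<and> 0 < Wr (f n)) \<and>
      (2 * Wr (f n) \<le> Wr (f (Suc n)) \<and> 2 * (f n / Wr (f n)) \<le> f (Suc n) / Wr (f (Suc n)))" by blast
  then have "sepr f" unfolding sepr_def by blast
  then show ?thesis by blast
qed


lemma no_Gq_lower:
  assumes L: "0 < L" "\<And>t. 0 < t \<Longrightarrow> L \<le> w t" and q: "1 < q" and vw: "is_weight v"
  shows "\<not> space_eq (Lambda1_norm w :: ('a::euclidean_space \<Rightarrow> real) \<Rightarrow> ennreal) (Gamma_norm q v)"
proof
  assume "space_eq (Lambda1_norm w :: ('a \<Rightarrow> real) \<Rightarrow> ennreal) (Gamma_norm q v)"
  then obtain C :: real where C: "C > 0" and CC: "\<And>f::'a \<Rightarrow> real. f \<in> borel_measurable lebesgue \<Longrightarrow>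
      Lambda1_norm w f \<le> ennreal C * Gamma_norm q v f \<and> Gamma_norm q v f \<le> ennreal C * Lambda1_norm w f"
    unfolding space_eq_def by blast
  have q0: "0 < q" using q by simp
  define v0 where "v0 x = indicator {0<..} x * v x" for x
  have v0m[measurable]: "v0 \<in> borel_measurable borel"
  proof -
    have "(\<lambda>x. indicator {0<..} x *\<^sub>R v x) \<in> borel_measurable lborel"
      using vw unfolding is_weight_def set_borel_measurable_def by auto
    then show ?thesis unfolding v0_def[abs_def] by simp
  qed
  have v0nn: "0 \<le> v0 x" for x using vw unfolding v0_def is_weight_def by (auto simp: indicator_def)
  have GI: "Gamma_norm q v f = epowr (\<integral>\<^sup>+ t. epowr (max_rearr f t) q * ennreal (v0 t) \<partial>lborel) (1/q)"
    for f :: "'a \<Rightarrow> real"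
  proof -
    have "(\<integral>\<^sup>+ t\<in>{0<..}. epowr (max_rearr f t) q * ennreal (v t) \<partial>lborel)
        = (\<integral>\<^sup>+ t. epowr (max_rearr f t) q * ennreal (v0 t) \<partial>lborel)"
      by (intro nn_integral_cong) (auto simp: v0_def indicator_def)
    then show ?thesis unfolding Gamma_norm_def by simp
  qed
  define Phi where "Phi s0 = (\<integral>\<^sup>+ t. ennreal ((min t s0 / t) powr q) * ennreal (v0 t) \<partial>lborel)" for s0
  have Phi: "Phi s0 \<le> ennreal ((C * Wr s0) powr q) \<and> ennreal ((L * s0 / C) powr q) \<le> Phi s0" if s0: "0 < s0" for s0
  proof -
    define h where "h = (testf (\<lambda>_. 1) (\<lambda>_. s0) 1 :: 'a \<Rightarrow> real)"
    have hm: "h \<in> borel_measurable lebesgue" unfolding h_def by (rule testf_meas) simp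
    have Lh: "Lambda1_norm w h = ennreal (Wr s0)"
      unfolding h_def using Lambda_testf[where 'a='a, of "\<lambda>_. 1" "\<lambda>_. s0" 1] s0 by simp
    have Mh: "max_rearr h t = ennreal (min t s0 / t)" if t: "0 < t" for t
      unfolding h_def using max_rearr_testf[where 'a='a, of "\<lambda>_. 1" "\<lambda>_. s0" t 1] s0 t by simp
    have "(\<integral>\<^sup>+ t. epowr (max_rearr h t) q * ennreal (v0 t) \<partial>lborel) = Phi s0"
      unfolding Phi_def
    proof (intro nn_integral_cong)
      fix t :: real
      show "epowr (max_rearr h t) q * ennreal (v0 t) = ennreal ((min t s0 / t) powr q) * ennreal (v0 t)"
      proof (cases "0 < t")
        case True
        then show ?thesis unfolding Mh[OF True] using s0 by (subst epowr_ennreal) auto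
      next
        case False then show ?thesis by (simp add: v0_def)
      qed
    qed
    then have GH: "Gamma_norm q v h = epowr (Phi s0) (1/q)" unfolding GI by simp
    have "epowr (Phi s0) (1/q) \<le> ennreal (C * Wr s0)"
      using CC[OF hm] unfolding GH Lh using C Wr_nonneg by (simp add: ennreal_mult)
    then have 1: "Phi s0 \<le> ennreal ((C * Wr s0) powr q)" using q0 C Wr_nonneg by (intro epowr_inv_le) auto
    have "L * s0 \<le> w s0 * s0" using L(2)[OF s0] s0 by (intro mult_right_mono) auto
    then have "L * s0 \<le> Wr s0" using W_lower[OF s0] by (simp add: mult.commute)
    then have "ennreal (L * s0) \<le> ennreal C * epowr (Phi s0) (1/q)"
      using CC[OF hm] unfolding GH Lh by (meson ennreal_leI order_trans)
    then have "ennreal (1/C) * ennreal (L * s0) \<le> ennreal (1/C) * (ennreal C * epowr (Phi s0) (1/q))"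
      by (rule mult_left_mono) simp
    then have "ennreal (L * s0 / C) \<le> epowr (Phi s0) (1/q)"
      using C L s0 by (simp add: mult.assoc[symmetric] ennreal_mult[symmetric])
    then have "epowr (ennreal (L * s0 / C)) q \<le> epowr (epowr (Phi s0) (1/q)) q"
      using q0 by (intro epowr_mono)
    also have "epowr (epowr (Phi s0) (1/q)) q = Phi s0"
      using epowr_inv[of "1/q" "Phi s0"] q0 by simp
    finally have 2: "ennreal ((L * s0 / C) powr q) \<le> Phi s0"
      using C L s0 by (simp add: epowr_ennreal)
    show ?thesis using 1 2 by blast
  qed
  define g where "g n t = ennreal ((min (1 / real (Suc n)) (1 / t)) powr q * v0 t)" for n t
  have gm: "g n \<in> borel_measurable lborel" for n unfolding g_def by measurable
  have geq: "(\<integral>\<^sup>+ t. g n t \<partial>lborel) = ennreal ((1 / real (Suc n)) powr q) * Phi (real (Suc n))" for n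
  proof -
    have "(\<integral>\<^sup>+ t. g n t \<partial>lborel) = (\<integral>\<^sup>+ t. ennreal ((1 / real (Suc n)) powr q) *
        (ennreal ((min t (real (Suc n)) / t) powr q) * ennreal (v0 t)) \<partial>lborel)"
    proof (intro nn_integral_cong)
      fix t :: real
      show "g n t = ennreal ((1 / real (Suc n)) powr q) * (ennreal ((min t (real (Suc n)) / t) powr q) * ennreal (v0 t))"
      proof (cases "0 < t")
        case True
        have "min (1 / real (Suc n)) (1 / t) = (1 / real (Suc n)) * (min t (real (Suc n)) / t)"
          using True by (cases "t \<le> real (Suc n)") (auto simp: min_def field_simps)
        then have "(min (1 / real (Suc n)) (1 / t)) powr q = (1 / real (Suc n)) powr q * (min t (real (Suc n)) / t) powr q"
        proof -
          have n1: "0 \<le> 1 / real (Suc n)" by simp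
          have n2: "0 \<le> min t (real (Suc n)) / t" using True by simp
          show ?thesis unfolding \<open>min (1 / real (Suc n)) (1 / t) = _\<close> by (rule powr_mult)
        qed
        then show ?thesis unfolding g_def using v0nn
          by (simp add: ennreal_mult[symmetric] mult.assoc del: ennreal_mult)
      next
        case False then show ?thesis by (simp add: g_def v0_def)
      qed
    qed
    also have "\<dots> = ennreal ((1 / real (Suc n)) powr q) * Phi (real (Suc n))"
      unfolding Phi_def by (rule nn_integral_cmult) simp
    finally show ?thesis .
  qed
  have glow: "ennreal ((L / C) powr q) \<le> (\<integral>\<^sup>+ t. g n t \<partial>lborel)" for n
  proof -
    have "ennreal ((1 / real (Suc n)) powr q) * ennreal ((L * real (Suc n) / C) powr q) \<le> (\<integral>\<^sup>+ t. g n t \<partial>lborel)"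
      unfolding geq using Phi[of "real (Suc n)"] by (intro mult_left_mono) auto
    moreover have "ennreal ((1 / real (Suc n)) powr q) * ennreal ((L * real (Suc n) / C) powr q) = ennreal ((L / C) powr q)"
    proof -
      have "(1 / real (Suc n)) powr q * (L * real (Suc n) / C) powr q = (1 / real (Suc n) * (L * real (Suc n) / C)) powr q"
        using L C by (subst powr_mult) auto
      also have "1 / real (Suc n) * (L * real (Suc n) / C) = L / C" by simp
      finally show ?thesis by (simp add: ennreal_mult[symmetric] del: ennreal_mult)
    qed
    ultimately show ?thesis by simp
  qed
  have dec: "decseq g"
  proof (rule decseq_SucI, rule le_funI)
    fix n t
    show "g (Suc n) t \<le> g n t"
    proof (cases "0 < t")
      case True
      have "1 / real (Suc (Suc n)) \<le> 1 / real (Suc n)" by (rule frac_le) auto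
      then have "min (1 / real (Suc (Suc n))) (1 / t) \<le> min (1 / real (Suc n)) (1 / t)"
        by (rule min.mono) simp
      then have "(min (1 / real (Suc (Suc n))) (1 / t)) powr q \<le> (min (1 / real (Suc n)) (1 / t)) powr q"
        using True q0 by (intro powr_mono2) auto
      then show ?thesis unfolding g_def using v0nn by (intro ennreal_leI mult_right_mono) auto
    next
      case False then show ?thesis by (simp add: g_def v0_def)
    qed
  qed
  have fin: "(\<integral>\<^sup>+ t. g 0 t \<partial>lborel) < \<infinity>"
  proof -
    have "Phi 1 \<le> ennreal ((C * Wr 1) powr q)" using Phi[of 1] by simp
    then have "Phi 1 < \<infinity>" by (rule le_less_trans) simp
    then show ?thesis unfolding geq by (simp add: ennreal_mult_less_top)
  qed
  have inf0: "(INF n. g n t) = 0" for t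
  proof (cases "0 < t")
    case False then show ?thesis by (simp add: g_def v0_def)
  next
    case True
    have lim: "(\<lambda>n. ennreal ((1 / real (Suc n)) powr q * v0 t)) \<longlonglongrightarrow> ennreal 0"
    proof (intro tendsto_ennrealI)
      have l1: "(\<lambda>n. 1 / real (Suc n)) \<longlonglongrightarrow> (0::real)"
        using LIMSEQ_inverse_real_of_nat by (simp add: inverse_eq_divide)
      have "(\<lambda>n. (1 / real (Suc n)) powr q) \<longlonglongrightarrow> 0"
        using q0 by (intro tendsto_zero_powrI[OF l1 tendsto_const]) auto
      then show "(\<lambda>n. (1 / real (Suc n)) powr q * v0 t) \<longlonglongrightarrow> 0" by (rule tendsto_mult_left_zero)
    qed
    have "(INF n. g n t) \<le> ennreal 0"
    proof (rule LIMSEQ_le_const[OF lim], intro exI allI impI)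
      fix n
      have "(min (1 / real (Suc n)) (1 / t)) powr q \<le> (1 / real (Suc n)) powr q"
        using True q0 by (intro powr_mono2) auto
      then have "g n t \<le> ennreal ((1 / real (Suc n)) powr q * v0 t)"
        unfolding g_def using v0nn by (intro ennreal_leI mult_right_mono) auto
      then show "(INF n. g n t) \<le> ennreal ((1 / real (Suc n)) powr q * v0 t)"
        by (rule INF_lower2[OF UNIV_I])
    qed
    then show ?thesis by simp
  qed
  have "(\<integral>\<^sup>+ t. (INF n. g n t) \<partial>lborel) = (INF n. (\<integral>\<^sup>+ t. g n t \<partial>lborel))"
    by (rule nn_integral_monotone_convergence_INF_decseq[OF dec gm fin])
  then have "(INF n. (\<integral>\<^sup>+ t. g n t \<partial>lborel)) = 0" unfolding inf0 by simp
  moreover have "ennreal ((L / C) powr q) \<le> (INF n. (\<integral>\<^sup>+ t. g n t \<partial>lborel))"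
    by (rule INF_greatest) (rule glow)
  moreover have "0 < (L / C) powr q" using L C by simp
  ultimately show False by simp
qed


lemma intg_bound:
  assumes Q: "set_integrable lborel {0<..} w" shows "\<exists>A. \<forall>t. Wr t \<le> A"
proof -
  have "integrable lborel w0"
    using Q unfolding set_integrable_def w0_def[abs_def] by simp
  then have "(\<integral>\<^sup>+ x. ennreal (norm (w0 x)) \<partial>lborel) < \<infinity>" using integrable_iff_bounded by blast
  then have fin: "(\<integral>\<^sup>+ x. ennreal (w0 x) \<partial>lborel) < \<infinity>" using w0_nonneg by simp
  have "Wr t \<le> enn2real (\<integral>\<^sup>+ x. ennreal (w0 x) \<partial>lborel)" for t
  proof -
    have "Wprim w t \<le> (\<integral>\<^sup>+ x. ennreal (w0 x) \<partial>lborel)" unfolding Wprim_eq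
      by (intro nn_integral_mono) (auto simp: indicator_def)
    then show ?thesis unfolding Wr_def using fin by (intro enn2real_mono) auto
  qed
  then show ?thesis by blast
qed

lemma bound_intg:
  assumes A: "\<And>t. Wr t \<le> A" shows "set_integrable lborel {0<..} w"
proof -
  define f where "f n x = ennreal (w0 x) * indicator {0<..<real n} x" for n x
  have inc: "incseq f"
  proof (rule incseq_SucI, rule le_funI)
    fix n x
    have "indicator {0<..<real n} x \<le> (indicator {0<..<real (Suc n)} x :: ennreal)"
      by (auto simp: indicator_def)
    then show "f n x \<le> f (Suc n) x" unfolding f_def by (rule mult_left_mono) simp
  qed
  have sup: "(SUP n. f n x) = ennreal (w0 x)" for x
  proof (rule antisym)
    show "(SUP n. f n x) \<le> ennreal (w0 x)"
      by (rule SUP_least) (auto simp: f_def indicator_def)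
    show "ennreal (w0 x) \<le> (SUP n. f n x)"
    proof (cases "0 < x")
      case True
      obtain n where "x < real n" using reals_Archimedean2 by blast
      then have "f n x = ennreal (w0 x)" using True by (simp add: f_def indicator_def)
      then show ?thesis by (metis SUP_upper UNIV_I)
    next
      case False then show ?thesis by (simp add: w0_def)
    qed
  qed
  have "(\<integral>\<^sup>+ x. ennreal (w0 x) \<partial>lborel) = (SUP n. (\<integral>\<^sup>+ x. f n x \<partial>lborel))"
    unfolding sup[symmetric] by (rule nn_integral_monotone_convergence_SUP[OF inc]) (unfold f_def[abs_def], measurable)
  also have "\<dots> \<le> ennreal A"
  proof (rule SUP_least)
    fix n
    have "(\<integral>\<^sup>+ x. f n x \<partial>lborel) = ennreal (Wr (real n))" unfolding f_def W_eq[symmetric] Wprim_eq ..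
    also have "\<dots> \<le> ennreal A" using A by (rule ennreal_leI)
    finally show "(\<integral>\<^sup>+ x. f n x \<partial>lborel) \<le> ennreal A" .
  qed
  finally have "(\<integral>\<^sup>+ x. ennreal (w0 x) \<partial>lborel) < \<infinity>" by (rule le_less_trans) simp
  then have "integrable lborel w0"
    by (intro integrableI_nonneg) (auto simp: w0_nonneg)
  then show ?thesis unfolding set_integrable_def w0_def[abs_def] by simp
qed

lemma intg_to0:
  assumes Q: "set_integrable lborel {0<..} w" shows "(w \<longlongrightarrow> 0) at_top"
proof -
  obtain A where A: "\<And>t. Wr t \<le> A" using intg_bound[OF Q] by blast
  have ex: "\<exists>T>0. w T < e" if e: "0 < e" for e
  proof (rule ccontr)
    assume "\<not> (\<exists>T>0. w T < e)"
    then have ge: "\<And>T. 0 < T \<Longrightarrow> e \<le> w T" by (meson not_le)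
    define t where "t = (\<bar>A\<bar> + 1) / e"
    have t: "0 < t" unfolding t_def using e by simp
    have "t * e \<le> t * w t" using ge[OF t] t by simp
    also have "\<dots> \<le> Wr t" by (rule W_lower[OF t])
    also have "\<dots> \<le> A" by (rule A)
    finally show False unfolding t_def using e by simp
  qed
  show ?thesis
  proof (rule order_tendstoI)
    fix e :: real assume "0 < e"
    then obtain T where T: "T > 0" "w T < e" using ex by blast
    show "\<forall>\<^sub>F x in at_top. w x < e"
      unfolding eventually_at_top_linorder
    proof (intro exI[of _ T] allI impI)
      fix x assume "T \<le> x"
      then have "w x \<le> w T" by (intro w_anti T(1))
      then show "w x < e" using T by simp
    qed
  next
    fix e :: real assume "e < 0"
    then show "\<forall>\<^sub>F x in at_top. e < w x"
      unfolding eventually_at_top_linorder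
    proof (intro exI[of _ 1] allI impI)
      fix x :: real assume "1 \<le> x"
      then have "0 \<le> w x" by (intro w_nonneg) simp
      then show "e < w x" using \<open>e < 0\<close> by linarith
    qed
  qed
qed

lemma zero_W: assumes "\<And>t. 0 < t \<Longrightarrow> w t = 0" shows "Wprim w t = 0"
proof -
  have "w0 x = 0" for x using assms by (simp add: w0_def indicator_def)
  then show ?thesis unfolding Wprim_eq by simp
qed

lemma zero_Lambda: assumes "\<And>t. 0 < t \<Longrightarrow> w t = 0" shows "Lambda1_norm w f = 0"
proof -
  have "w0 x = 0" for x using assms by (simp add: w0_def indicator_def)
  then show ?thesis unfolding Lambda_eq by simp
qed

end


context dw
begin

lemma zero_weight: "is_weight (\<lambda>_. 0)"
  unfolding is_weight_def set_borel_measurable_def set_integrable_def by simp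

lemma PQ_II:
  assumes P: "\<exists>B. \<forall>x>0. w x \<le> B" and Q: "set_integrable lborel {0<..} w"
  shows "\<forall>q::real. 1 < q \<longrightarrow> (\<exists>wq. is_weight wq \<and>
             equiv_on_pos (\<lambda>r. epowr (Wprim w r) q)
               (\<lambda>r. (\<integral>\<^sup>+ x\<in>{0<..<r}. ennreal (wq x) \<partial>lborel)
                    + ennreal (r powr q) * (\<integral>\<^sup>+ x\<in>{r<..}. ennreal (wq x * x powr (-q)) \<partial>lborel)) \<and>
             space_eq (Lambda1_norm w :: ('a::euclidean_space \<Rightarrow> real) \<Rightarrow> ennreal) (Gamma_norm q wq))"
proof (intro allI impI)
  fix q :: real assume q: "1 < q"
  then have q0: "0 < q" by simp
  obtain B where B: "\<And>x. 0 < x \<Longrightarrow> w x \<le> B" using P by blast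
  interpret dwb w B using B Q by unfold_locales auto
  show "\<exists>wq. is_weight wq \<and>
             equiv_on_pos (\<lambda>r. epowr (Wprim w r) q)
               (\<lambda>r. (\<integral>\<^sup>+ x\<in>{0<..<r}. ennreal (wq x) \<partial>lborel)
                    + ennreal (r powr q) * (\<integral>\<^sup>+ x\<in>{r<..}. ennreal (wq x * x powr (-q)) \<partial>lborel)) \<and>
             space_eq (Lambda1_norm w :: ('a \<Rightarrow> real) \<Rightarrow> ennreal) (Gamma_norm q wq)"
  proof (cases "\<exists>a>0. 0 < w a")
    case True
    then obtain a where a: "0 < a" "0 < w a" by blast
    show ?thesis
      by (intro exI[of _ "va a"] conjI va_weight fwd_equiv fwd_Gq a q0)
  next
    case False
    then have z: "\<And>t. 0 < t \<Longrightarrow> w t = 0" using w_nonneg by force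
    have e: "equiv_on_pos (\<lambda>r. epowr (Wprim w r) q)
               (\<lambda>r. (\<integral>\<^sup>+ x\<in>{0<..<r}. ennreal ((\<lambda>_. 0::real) x) \<partial>lborel)
                    + ennreal (r powr q) * (\<integral>\<^sup>+ x\<in>{r<..}. ennreal ((\<lambda>_. 0::real) x * x powr (-q)) \<partial>lborel))"
      unfolding equiv_on_pos_def by (intro exI[of _ 1]) (simp add: zero_W[OF z])
    have s: "space_eq (Lambda1_norm w :: ('a \<Rightarrow> real) \<Rightarrow> ennreal) (Gamma_norm q (\<lambda>_. 0))"
      unfolding space_eq_def Gamma_norm_def by (intro exI[of _ 1]) (simp add: zero_Lambda[OF z])
    show ?thesis using zero_weight e s by blast
  qed
qed

lemma PQ_III:
  assumes P: "\<exists>B. \<forall>x>0. w x \<le> B" and Q: "set_integrable lborel {0<..} w"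
  shows "space_eq (Lambda1_norm w :: ('a::euclidean_space \<Rightarrow> real) \<Rightarrow> ennreal) (Gamma1inf_norm w) \<and>
          (w \<longlongrightarrow> 0) at_top \<and> set_integrable lborel {0<..} w"
proof (intro conjI Q intg_to0)
  obtain B where B: "\<And>x. 0 < x \<Longrightarrow> w x \<le> B" using P by blast
  interpret dwb w B using B Q by unfold_locales auto
  show "space_eq (Lambda1_norm w :: ('a \<Rightarrow> real) \<Rightarrow> ennreal) (Gamma1inf_norm w)"
  proof (cases "\<exists>a>0. 0 < w a")
    case True
    then obtain a where a: "0 < a" "0 < w a" by blast
    show ?thesis by (rule fwd_G1[OF a])
  next
    case False
    then have z: "\<And>t. 0 < t \<Longrightarrow> w t = 0" using w_nonneg by force
    show ?thesis
      unfolding space_eq_def Gamma1inf_norm_def by (intro exI[of _ 1]) (simp add: zero_W[OF z] zero_Lambda[OF z])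
  qed
qed

lemma I_P:
  assumes "\<exists>q v. 1 < q \<and> is_weight v \<and> space_eq (Lambda1_norm w :: ('a::euclidean_space \<Rightarrow> real) \<Rightarrow> ennreal) (Gamma_norm q v)"
  shows "\<exists>B. \<forall>x>0. w x \<le> B"
proof (rule ccontr)
  assume "\<not> (\<exists>B. \<forall>x>0. w x \<le> B)"
  then obtain s where "sepr s" using seq_down by blast
  then show False using assms no_Gq[where 'a='a] by blast
qed

lemma I_Q:
  assumes "\<exists>q v. 1 < q \<and> is_weight v \<and> space_eq (Lambda1_norm w :: ('a::euclidean_space \<Rightarrow> real) \<Rightarrow> ennreal) (Gamma_norm q v)"
  shows "set_integrable lborel {0<..} w"
proof (rule ccontr)
  assume nQ: "\<not> set_integrable lborel {0<..} w"
  have unb: "\<not> (\<exists>A. \<forall>t. Wr t \<le> A)" using nQ bound_intg by blast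
  obtain q v where qv: "1 < q" "is_weight v" "space_eq (Lambda1_norm w :: ('a \<Rightarrow> real) \<Rightarrow> ennreal) (Gamma_norm q v)"
    using assms by blast
  show False
  proof (cases "\<forall>e>0. \<exists>T>0. w T < e")
    case True
    then obtain s where "sepr s" using seq_up[OF unb] by blast
    then show False using qv no_Gq[where 'a='a] by blast
  next
    case False
    then obtain e where e: "0 < e" "\<And>T. 0 < T \<Longrightarrow> e \<le> w T" by (meson not_le)
    show False using no_Gq_lower[where 'a='a, OF e qv(1,2)] qv(3) by blast
  qed
qed

lemma III_P:
  assumes "space_eq (Lambda1_norm w :: ('a::euclidean_space \<Rightarrow> real) \<Rightarrow> ennreal) (Gamma1inf_norm w)"
  shows "\<exists>B. \<forall>x>0. w x \<le> B"
proof (rule ccontr)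
  assume "\<not> (\<exists>B. \<forall>x>0. w x \<le> B)"
  then obtain s where "sepr s" using seq_down by blast
  then show False using assms no_G1[where 'a='a] by blast
qed

end

theorem proposition3p3:
  fixes w :: "real \<Rightarrow> real"
    and dummy :: "'a::euclidean_space itself"
  assumes "decreasing_weight w"
    and "\<forall>t>0. Wprim w t < \<infinity>"
  shows "((\<exists>q v. 1 < q \<and> is_weight v \<and>
             space_eq (Lambda1_norm w :: ('a \<Rightarrow> real) \<Rightarrow> ennreal) (Gamma_norm q v))
        \<longleftrightarrow>
         (\<forall>q::real. 1 < q \<longrightarrow> (\<exists>wq. is_weight wq \<and>
             equiv_on_pos (\<lambda>r. epowr (Wprim w r) q)
               (\<lambda>r. (\<integral>\<^sup>+ x\<in>{0<..<r}. ennreal (wq x) \<partial>lborel)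
                    + ennreal (r powr q) * (\<integral>\<^sup>+ x\<in>{r<..}. ennreal (wq x * x powr (-q)) \<partial>lborel)) \<and>
             space_eq (Lambda1_norm w :: ('a \<Rightarrow> real) \<Rightarrow> ennreal) (Gamma_norm q wq))))
      \<and>
        ((\<exists>q v. 1 < q \<and> is_weight v \<and>
             space_eq (Lambda1_norm w :: ('a \<Rightarrow> real) \<Rightarrow> ennreal) (Gamma_norm q v))
        \<longleftrightarrow>
         (space_eq (Lambda1_norm w :: ('a \<Rightarrow> real) \<Rightarrow> ennreal) (Gamma1inf_norm w) \<and>
          (w \<longlongrightarrow> 0) at_top \<and> set_integrable lborel {0<..} w))"
proof -
  interpret dw w using assms by unfold_locales auto
  have II_I: "\<exists>q v. 1 < q \<and> is_weight v \<and> space_eq (Lambda1_norm w :: ('a \<Rightarrow> real) \<Rightarrow> ennreal) (Gamma_norm q v)"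
    if p: "\<forall>q::real. 1 < q \<longrightarrow> (\<exists>wq. is_weight wq \<and> X q wq \<and>
             space_eq (Lambda1_norm w :: ('a \<Rightarrow> real) \<Rightarrow> ennreal) (Gamma_norm q wq))" for X
  proof -
    obtain wq where "is_weight wq" "space_eq (Lambda1_norm w :: ('a \<Rightarrow> real) \<Rightarrow> ennreal) (Gamma_norm 2 wq)"
      using p[rule_format, of 2] by auto
    then show ?thesis by (intro exI[of _ 2] exI[of _ wq]) auto
  qed
  let ?I = "\<exists>q v. 1 < q \<and> is_weight v \<and> space_eq (Lambda1_norm w :: ('a \<Rightarrow> real) \<Rightarrow> ennreal) (Gamma_norm q v)"
  let ?II = "\<forall>q::real. 1 < q \<longrightarrow> (\<exists>wq. is_weight wq \<and>
             equiv_on_pos (\<lambda>r. epowr (Wprim w r) q)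
               (\<lambda>r. (\<integral>\<^sup>+ x\<in>{0<..<r}. ennreal (wq x) \<partial>lborel)
                    + ennreal (r powr q) * (\<integral>\<^sup>+ x\<in>{r<..}. ennreal (wq x * x powr (-q)) \<partial>lborel)) \<and>
             space_eq (Lambda1_norm w :: ('a \<Rightarrow> real) \<Rightarrow> ennreal) (Gamma_norm q wq))"
  let ?III = "space_eq (Lambda1_norm w :: ('a \<Rightarrow> real) \<Rightarrow> ennreal) (Gamma1inf_norm w) \<and>
          (w \<longlongrightarrow> 0) at_top \<and> set_integrable lborel {0<..} w"
  have F1: "?I \<Longrightarrow> ?II" using PQ_II[where 'a='a] I_P[where 'a='a] I_Q[where 'a='a] by blast
  have F2: "?II \<Longrightarrow> ?I" by (rule II_I)
  have F3: "?I \<Longrightarrow> ?III" using PQ_III[where 'a='a] I_P[where 'a='a] I_Q[where 'a='a] by blast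
  have F4: "?III \<Longrightarrow> ?I"
  proof -
    assume p: ?III
    have "\<exists>B. \<forall>x>0. w x \<le> B" using III_P[where 'a='a] p by blast
    then have ?II using PQ_II[where 'a='a] p by blast
    then show ?I by (rule F2)
  qed
  show ?thesis using F1 F2 F3 F4 by blast
qed

end
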